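(* Let $G$ be a connected graph on $n\geq 2$ vertices and let $H$ be a blowup of $G$ with $m$ vertices. Suppose $\sigma$ is a multiset consisting of $n$ distinct real numbers and $\sigma'$ is any multiset of $m-n$ real numbers. Then $\sigma\cup\sigma'$ is the spectrum of some matrix in $\mathcal{S}(H)$.
   Context: For a simple graph $G$ on $n$ vertices, $\mathcal{S}(G)$ is the set of all $n\times n$ real symmetric matrices $A=(a_{ij})$ such that for $i\neq j$, $a_{ij}\neq 0$ if and only if $\{i,j\}$ is an edge of $G$ (diagonal entries unrestricted). For a vertex $v$ and a positive integer $k$, the $k$-duplication of $v$ replaces $v$ by $k$ mutually adjacent vertices, each adjacent to exactly the neighbours of $v$ in $G-v$. If $V(G)=\{v_1,\ldots,v_n\}$ and $m_1,\ldots,m_n$ are positive integers, the blowup of $G$ with respect to $m_1,\ldots,m_n$ is obtained by performing the $m_i$-duplication of $v_i$ for $i=1,\ldots,n$ sequentially; it has $\sum_i m_i$ vertices. *)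

theory Defs
  imports "Jordan_Normal_Form.Char_Poly" "HOL-Library.Multiset"
begin

definition simple_graph :: "nat \<Rightarrow> (nat \<Rightarrow> nat \<Rightarrow> bool) \<Rightarrow> bool" where
  "simple_graph n E \<longleftrightarrow>
     (\<forall>i j. E i j \<longrightarrow> i < n \<and> j < n \<and> i \<noteq> j \<and> E j i)"

definition connected_graph :: "nat \<Rightarrow> (nat \<Rightarrow> nat \<Rightarrow> bool) \<Rightarrow> bool" where
  "connected_graph n E \<longleftrightarrow> (\<forall>i<n. \<forall>j<n. E\<^sup>*\<^sup>* i j)"

(* H (on {0..<m}) is a blowup of G = ({0..<n},E): there is a surjection f onto
   the vertices of G whose fibres are the cliques replacing the vertices of G
   (fibre of i has size m_i \<ge> 1), and two distinct vertices of H are adjacent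
   iff they lie in the same fibre or their images are adjacent in G. *)
definition is_blowup ::
  "nat \<Rightarrow> (nat \<Rightarrow> nat \<Rightarrow> bool) \<Rightarrow> nat \<Rightarrow> (nat \<Rightarrow> nat \<Rightarrow> bool) \<Rightarrow> bool" where
  "is_blowup n E m H \<longleftrightarrow>
     (\<exists>f. f ` {0..<m} = {0..<n} \<and>
          (\<forall>u v. H u v \<longleftrightarrow> u < m \<and> v < m \<and> u \<noteq> v \<and> (f u = f v \<or> E (f u) (f v))))"

definition S_graph :: "nat \<Rightarrow> (nat \<Rightarrow> nat \<Rightarrow> bool) \<Rightarrow> real mat set" where
  "S_graph n E = {A. A \<in> carrier_mat n n \<and> transpose_mat A = A \<and>
      (\<forall>i<n. \<forall>j<n. i \<noteq> j \<longrightarrow> (A $$ (i, j) \<noteq> 0 \<longleftrightarrow> E i j))}"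

definition is_spectrum :: "real mat \<Rightarrow> real multiset \<Rightarrow> bool" where
  "is_spectrum A S \<longleftrightarrow> char_poly A = (\<Prod>a\<in>#S. [:- a, 1:])"

end

theory Submission
  imports Defs
begin

lemma prod_abs_le_pow:
  fixes b :: "nat \<Rightarrow> real"
  assumes "finite S" "\<forall>i\<in>S. \<bar>b i\<bar> \<le> K"
  shows "\<bar>prod b S\<bar> \<le> K ^ card S"
proof -
  have "\<bar>prod b S\<bar> = prod (\<lambda>i. \<bar>b i\<bar>) S" by (simp add: abs_prod)
  also have "\<dots> \<le> prod (\<lambda>i. K) S" by (rule prod_mono) (use assms in auto)
  finally show ?thesis by simp
qed

lemma prod_diff_bound:
  fixes a b :: "nat \<Rightarrow> real"
  assumes "finite S" "\<forall>i\<in>S. \<bar>a i\<bar> \<le> K \<and> \<bar>b i\<bar> \<le> K \<and> \<bar>a i - b i\<bar> \<le> \<eta>" "1 \<le> K" "0 \<le> \<eta>"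
  shows "\<bar>prod a S - prod b S\<bar> \<le> real (card S) * K ^ (card S) * \<eta>"
  using assms
proof (induction S rule: finite_induct)
  case empty
  then show ?case by simp
next
  case (insert x S)
  let ?c = "card S"
  have IH: "\<bar>prod a S - prod b S\<bar> \<le> real ?c * K ^ ?c * \<eta>" using insert by auto
  have ax: "\<bar>a x\<bar> \<le> K" and dx: "\<bar>a x - b x\<bar> \<le> \<eta>" using insert by auto
  have pb: "\<bar>prod b S\<bar> \<le> K ^ ?c" by (rule prod_abs_le_pow) (use insert in auto)
  have "prod a (insert x S) - prod b (insert x S) = a x * (prod a S - prod b S) + (a x - b x) * prod b S"
    using insert by (simp add: algebra_simps)
  hence "\<bar>prod a (insert x S) - prod b (insert x S)\<bar> \<le> \<bar>a x\<bar> * \<bar>prod a S - prod b S\<bar> + \<bar>a x - b x\<bar> * \<bar>prod b S\<bar>"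
    by (simp add: abs_mult[symmetric] abs_triangle_ineq)
  also have "\<dots> \<le> K * (real ?c * K ^ ?c * \<eta>) + \<eta> * K ^ ?c"
    by (intro add_mono mult_mono IH ax dx pb) (use insert.prems in auto)
  also have "\<dots> \<le> K * (real ?c * K ^ ?c * \<eta>) + \<eta> * K ^ Suc ?c"
  proof -
    have "K ^ ?c \<le> K ^ Suc ?c" using insert.prems(2) by (simp add: power_increasing)
    thus ?thesis using insert.prems(3) by (simp add: mult_left_mono)
  qed
  also have "\<dots> = real (Suc ?c) * K ^ Suc ?c * \<eta>" by (simp add: algebra_simps)
  finally show ?case using insert by simp
qed

lemma det_lip:
  fixes A B :: "real mat"
  assumes A: "A \<in> carrier_mat k k" and B: "B \<in> carrier_mat k k"
    and bnd: "\<And>i j. i < k \<Longrightarrow> j < k \<Longrightarrow> \<bar>A $$ (i,j)\<bar> \<le> K \<and> \<bar>B $$ (i,j)\<bar> \<le> K \<and> \<bar>A $$ (i,j) - B $$ (i,j)\<bar> \<le> \<eta>"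
    and K: "1 \<le> K" and eta: "0 \<le> \<eta>"
  shows "\<bar>det A - det B\<bar> \<le> fact k * (real k * K ^ k * \<eta>)"
proof -
  let ?P = "{p. p permutes {0..<k}}"
  have fin: "finite ?P" by (simp add: finite_permutations)
  have "det A - det B = (\<Sum>p\<in>?P. signof p * ((\<Prod>i=0..<k. A $$ (i, p i)) - (\<Prod>i=0..<k. B $$ (i, p i))))"
    unfolding det_def'[OF A] det_def'[OF B] by (simp add: sum_subtractf algebra_simps)
  hence "\<bar>det A - det B\<bar> \<le> (\<Sum>p\<in>?P. \<bar>signof p * ((\<Prod>i=0..<k. A $$ (i, p i)) - (\<Prod>i=0..<k. B $$ (i, p i)))\<bar>)"
    by (simp add: sum_abs)
  also have "\<dots> \<le> (\<Sum>p\<in>?P. real k * K ^ k * \<eta>)"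
  proof (rule sum_mono)
    fix p assume "p \<in> ?P"
    hence p: "p permutes {0..<k}" by simp
    have "\<bar>signof p\<bar> = (1::real)" by (simp add: sign_def)
    moreover have "\<bar>(\<Prod>i=0..<k. A $$ (i, p i)) - (\<Prod>i=0..<k. B $$ (i, p i))\<bar> \<le> real (card {0..<k}) * K ^ (card {0..<k}) * \<eta>"
      apply (rule prod_diff_bound)
      using bnd permutes_in_image[OF p] K eta by auto
    ultimately show "\<bar>signof p * ((\<Prod>i=0..<k. A $$ (i, p i)) - (\<Prod>i=0..<k. B $$ (i, p i)))\<bar> \<le> real k * K ^ k * \<eta>"
      by (simp add: abs_mult)
  qed
  also have "\<dots> = fact k * (real k * K ^ k * \<eta>)"
    by (simp add: card_permutations)
  finally show ?thesis .
qed

definition Mi :: "nat \<Rightarrow> (nat \<Rightarrow> real) \<Rightarrow> (nat \<Rightarrow> nat \<Rightarrow> real) \<Rightarrow> nat \<Rightarrow> (nat \<Rightarrow> real) \<Rightarrow> real \<Rightarrow> real mat" where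
  "Mi n lam N i w t = mat n n (\<lambda>(a,b). if a = b then lam i - w a else - (t * N a b))"

lemma Mi_carrier[simp]: "Mi n lam N i w t \<in> carrier_mat n n"
  by (simp add: Mi_def)

lemma Mi_dim[simp]: "dim_row (Mi n lam N i w t) = n" "dim_col (Mi n lam N i w t) = n"
  by (simp_all add: Mi_def)

lemma Mi_index: "a < n \<Longrightarrow> b < n \<Longrightarrow> Mi n lam N i w t $$ (a,b) = (if a = b then lam i - w a else - (t * N a b))"
  by (simp add: Mi_def)

lemma mat_delete_index':
  "a < dim_row A - 1 \<Longrightarrow> b < dim_col A - 1 \<Longrightarrow>
   mat_delete A i j $$ (a,b) = A $$ (if a < i then a else Suc a, if b < j then b else Suc b)"
  unfolding mat_delete_def by simp

lemma Mi_delete_upd: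
  assumes "j < n"
  shows "mat_delete (Mi n lam N i (w(j:=\<alpha>)) t) j l = mat_delete (Mi n lam N i w t) j l"
proof (rule eq_matI)
  fix a b assume a: "a < dim_row (mat_delete (Mi n lam N i w t) j l)" and b: "b < dim_col (mat_delete (Mi n lam N i w t) j l)"
  have a': "(if a < j then a else Suc a) < n" "(if a < j then a else Suc a) \<noteq> j" using a assms by auto
  have b': "(if b < l then b else Suc b) < n" using b by auto
  show "mat_delete (Mi n lam N i (w(j:=\<alpha>)) t) j l $$ (a, b) = mat_delete (Mi n lam N i w t) j l $$ (a, b)"
    using a b a' b' by (simp add: mat_delete_index' Mi_index)
qed auto

lemma Mi_affine:
  assumes j: "j < n"
  shows "det (Mi n lam N i (w(j:=\<alpha>)) t) - det (Mi n lam N i (w(j:=\<beta>)) t)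
       = (\<beta> - \<alpha>) * det (mat_delete (Mi n lam N i w t) j j)"
proof -
  let ?A = "Mi n lam N i (w(j:=\<alpha>)) t" and ?B = "Mi n lam N i (w(j:=\<beta>)) t"
  have cofeq: "cofactor ?A j l = cofactor ?B j l" for l
    unfolding cofactor_def using Mi_delete_upd[OF j] by metis
  have "det ?A - det ?B = (\<Sum>l<n. (?A $$ (j,l) - ?B $$ (j,l)) * cofactor ?A j l)"
    unfolding laplace_expansion_row[OF Mi_carrier j, of lam N i "w(j:=\<alpha>)" t]
      laplace_expansion_row[OF Mi_carrier j, of lam N i "w(j:=\<beta>)" t]
    by (simp add: cofeq sum_subtractf algebra_simps)
  also have "\<dots> = (\<Sum>l<n. if l = j then (\<beta> - \<alpha>) * cofactor ?A j j else 0)"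
    by (rule sum.cong) (auto simp: Mi_index j)
  also have "\<dots> = (\<beta> - \<alpha>) * cofactor ?A j j" using j by simp
  also have "cofactor ?A j j = det (mat_delete (Mi n lam N i w t) j j)"
    unfolding cofactor_def Mi_delete_upd[OF j] by (simp add: power_add[symmetric] mult_2[symmetric])
  finally show ?thesis .
qed

definition hyb :: "(nat \<Rightarrow> real) \<Rightarrow> (nat \<Rightarrow> real) \<Rightarrow> nat \<Rightarrow> nat \<Rightarrow> real" where
  "hyb x y j = (\<lambda>a. if a < j then x a else y a)"

lemma Mi_cong: "(\<And>a. a < n \<Longrightarrow> x a = y a) \<Longrightarrow> Mi n lam N i x t = Mi n lam N i y t"
  by (rule eq_matI) (auto simp: Mi_index)

lemma Mi_telescope:
  "det (Mi n lam N i x t) - det (Mi n lam N i y t)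
   = (\<Sum>j<n. (y j - x j) * det (mat_delete (Mi n lam N i (hyb x y j) t) j j))"
proof -
  have "(\<Sum>j<n. det (Mi n lam N i (hyb x y (Suc j)) t) - det (Mi n lam N i (hyb x y j) t))
      = det (Mi n lam N i (hyb x y n) t) - det (Mi n lam N i (hyb x y 0) t)"
    by (rule sum_lessThan_telescope)
  also have "Mi n lam N i (hyb x y n) t = Mi n lam N i x t" by (rule Mi_cong) (simp add: hyb_def)
  also have "hyb x y 0 = y" by (simp add: hyb_def)
  finally have eq: "det (Mi n lam N i x t) - det (Mi n lam N i y t) = (\<Sum>j<n. det (Mi n lam N i (hyb x y (Suc j)) t) - det (Mi n lam N i (hyb x y j) t))" by simp
  show ?thesis unfolding eq
  proof (rule sum.cong)
    fix j assume "j \<in> {..<n}"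
    hence j: "j < n" by simp
    have e1: "hyb x y (Suc j) = (hyb x y j)(j := x j)" by (auto simp: hyb_def)
    have e2: "hyb x y j = (hyb x y j)(j := y j)" by (auto simp: hyb_def)
    have "det (Mi n lam N i (hyb x y (Suc j)) t) - det (Mi n lam N i (hyb x y j) t)
        = det (Mi n lam N i ((hyb x y j)(j := x j)) t) - det (Mi n lam N i ((hyb x y j)(j := y j)) t)"
      using e1 e2 by metis
    also have "\<dots> = (y j - x j) * det (mat_delete (Mi n lam N i (hyb x y j) t) j j)"
      by (rule Mi_affine[OF j])
    finally show "det (Mi n lam N i (hyb x y (Suc j)) t) - det (Mi n lam N i (hyb x y j) t) = (y j - x j) * det (mat_delete (Mi n lam N i (hyb x y j) t) j j)" .
  qed simp
qed

lemma mat_delete_bounds: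
  fixes A B :: "real mat"
  assumes A: "A \<in> carrier_mat n n" and B: "B \<in> carrier_mat n n" and j: "j < n"
    and bnd: "\<And>a b. a < n \<Longrightarrow> b < n \<Longrightarrow> \<bar>A $$ (a,b)\<bar> \<le> K \<and> \<bar>B $$ (a,b)\<bar> \<le> K \<and> \<bar>A $$ (a,b) - B $$ (a,b)\<bar> \<le> \<eta>"
  shows "\<And>a b. a < n - 1 \<Longrightarrow> b < n - 1 \<Longrightarrow> \<bar>mat_delete A j j $$ (a,b)\<bar> \<le> K \<and> \<bar>mat_delete B j j $$ (a,b)\<bar> \<le> K \<and> \<bar>mat_delete A j j $$ (a,b) - mat_delete B j j $$ (a,b)\<bar> \<le> \<eta>"
proof -
  fix a b assume a: "a < n - 1" and b: "b < n - 1"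
  have i1: "(if a < j then a else Suc a) < n" "(if b < j then b else Suc b) < n" using a b by auto
  show "\<bar>mat_delete A j j $$ (a,b)\<bar> \<le> K \<and> \<bar>mat_delete B j j $$ (a,b)\<bar> \<le> K \<and> \<bar>mat_delete A j j $$ (a,b) - mat_delete B j j $$ (a,b)\<bar> \<le> \<eta>"
    using A B a b bnd[OF i1] by (simp add: mat_delete_index')
qed

lemma det_lip_delete:
  fixes A B :: "real mat"
  assumes A: "A \<in> carrier_mat n n" and B: "B \<in> carrier_mat n n" and j: "j < n"
    and bnd: "\<And>a b. a < n \<Longrightarrow> b < n \<Longrightarrow> \<bar>A $$ (a,b)\<bar> \<le> K \<and> \<bar>B $$ (a,b)\<bar> \<le> K \<and> \<bar>A $$ (a,b) - B $$ (a,b)\<bar> \<le> \<eta>"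
    and K: "1 \<le> K" and eta: "0 \<le> \<eta>"
  shows "\<bar>det (mat_delete A j j) - det (mat_delete B j j)\<bar> \<le> fact n * (real n * K ^ n) * \<eta>"
proof -
  have "\<bar>det (mat_delete A j j) - det (mat_delete B j j)\<bar> \<le> fact (n-1) * (real (n-1) * K ^ (n-1) * \<eta>)"
    by (rule det_lip[OF mat_delete_carrier[OF A] mat_delete_carrier[OF B] mat_delete_bounds[OF A B j bnd] K eta])
  also have "\<dots> \<le> fact n * (real n * K ^ n * \<eta>)"
  proof -
    have "(fact (n-1) :: real) \<le> fact n" by (rule fact_mono) auto
    moreover have "real (n-1) * K ^ (n-1) * \<eta> \<le> real n * K ^ n * \<eta>"
      using K eta by (intro mult_right_mono mult_mono power_increasing) auto
    ultimately show ?thesis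
      by (intro mult_mono) (use K eta in \<open>auto intro: power_increasing\<close>)
  qed
  finally show ?thesis by (simp add: algebra_simps)
qed

definition ins_idx :: "nat \<Rightarrow> nat \<Rightarrow> nat" where "ins_idx j a = (if a < j then a else Suc a)"

lemma det_diag_mat:
  fixes A :: "real mat"
  assumes A: "A \<in> carrier_mat k k" and diag: "\<And>a b. a < k \<Longrightarrow> b < k \<Longrightarrow> a \<noteq> b \<Longrightarrow> A $$ (a,b) = 0"
  shows "det A = (\<Prod>a<k. A $$ (a,a))"
proof -
  have "upper_triangular A" using A diag unfolding upper_triangular_def by auto
  hence "det A = prod_list (diag_mat A)" by (rule det_upper_triangular[OF _ A])
  also have "\<dots> = (\<Prod>a<k. A $$ (a,a))" using A
    by (simp add: diag_mat_def prod.distinct_set_conv_list[symmetric] atLeast0LessThan)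
  finally show ?thesis .
qed

definition Phi :: "nat \<Rightarrow> (nat \<Rightarrow> real) \<Rightarrow> (nat \<Rightarrow> nat \<Rightarrow> real) \<Rightarrow> (nat \<Rightarrow> real) \<Rightarrow> real \<Rightarrow> (nat \<Rightarrow> real) \<Rightarrow> (nat \<Rightarrow> real)" where
  "Phi n lam N c t x = (\<lambda>a. x a + det (Mi n lam N a x t) / c a)"

locale base_setup =
  fixes n :: nat and lam :: "nat \<Rightarrow> real" and N :: "nat \<Rightarrow> nat \<Rightarrow> real" and K0 :: real
  assumes lam_dist: "\<And>i j. i < n \<Longrightarrow> j < n \<Longrightarrow> i \<noteq> j \<Longrightarrow> lam i \<noteq> lam j"
    and K0: "\<And>a b. \<bar>N a b\<bar> \<le> K0"
begin

definition c :: "nat \<Rightarrow> real" where "c i = det (mat_delete (Mi n lam N i lam 0) i i)"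
definition D0 :: "nat \<Rightarrow> nat \<Rightarrow> real" where "D0 i j = det (mat_delete (Mi n lam N i lam 0) j j)"
definition Lam :: real where "Lam = (\<Sum>a<n. \<Sum>b<n. \<bar>lam a - lam b\<bar>)"
definition K :: real where "K = Lam + 1 + K0"
definition L0 :: real where "L0 = fact n * (real n * K ^ n)"

lemma K0_nonneg: "0 \<le> K0" using K0[of 0 0] by simp

lemma Lam_ge: "a < n \<Longrightarrow> b < n \<Longrightarrow> \<bar>lam a - lam b\<bar> \<le> Lam"
proof -
  assume a: "a < n" and b: "b < n"
  have "\<bar>lam a - lam b\<bar> \<le> (\<Sum>b<n. \<bar>lam a - lam b\<bar>)"
    by (rule member_le_sum) (use b in auto)
  also have "\<dots> \<le> Lam" unfolding Lam_def
    by (rule member_le_sum[where f = "\<lambda>a. \<Sum>b<n. \<bar>lam a - lam b\<bar>"]) (use a in \<open>auto intro: sum_nonneg\<close>)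
  finally show ?thesis .
qed

lemma Lam_nonneg: "0 \<le> Lam" unfolding Lam_def by (auto intro: sum_nonneg)

lemma K_ge1: "1 \<le> K" unfolding K_def using Lam_nonneg K0_nonneg by simp

lemma L0_nonneg: "0 \<le> L0" unfolding L0_def using K_ge1 by simp

lemma Mi0_offdiag: "a < n \<Longrightarrow> b < n \<Longrightarrow> a \<noteq> b \<Longrightarrow> Mi n lam N i lam 0 $$ (a,b) = 0"
  by (simp add: Mi_index)

lemma D0_entries:
  assumes j: "j < n" and a: "a < n - 1" and b: "b < n - 1"
  shows "mat_delete (Mi n lam N i lam 0) j j $$ (a,b) = (if a = b then lam i - lam (ins_idx j a) else 0)"
  using a b j by (auto simp: mat_delete_index' Mi_index ins_idx_def)

lemma D0_prod: "j < n \<Longrightarrow> D0 i j = (\<Prod>a<n-1. lam i - lam (ins_idx j a))"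
  unfolding D0_def
  by (subst det_diag_mat[OF mat_delete_carrier[OF Mi_carrier]]) (auto simp: D0_entries)

lemma c_D0: "c i = D0 i i" unfolding c_def D0_def by simp

lemma c_nonzero:
  assumes i: "i < n" shows "c i \<noteq> 0"
proof -
  have "\<forall>a<n-1. lam i - lam (ins_idx i a) \<noteq> 0"
  proof (intro allI impI notI)
    fix a assume a: "a < n - 1" and eq: "lam i - lam (ins_idx i a) = 0"
    have "ins_idx i a < n" "ins_idx i a \<noteq> i" using a by (auto simp: ins_idx_def)
    thus False using lam_dist[OF i, of "ins_idx i a"] eq by auto
  qed
  hence "(\<Prod>a<n-1. lam i - lam (ins_idx i a)) \<noteq> 0" by (simp add: prod_zero_iff)
  thus ?thesis unfolding c_D0 D0_prod[OF i] .
qed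

lemma D0_offdiag:
  assumes i: "i < n" and j: "j < n" and ji: "j \<noteq> i" shows "D0 i j = 0"
proof -
  let ?a = "if i < j then i else i - 1"
  have "?a < n - 1" "ins_idx j ?a = i" using i j ji by (auto simp: ins_idx_def)
  hence "\<exists>a\<in>{..<n - 1}. lam i - lam (ins_idx j a) = 0" by (intro bexI[of _ ?a]) auto
  thus ?thesis unfolding D0_prod[OF j] by (simp add: prod_zero_iff)
qed

lemma D0_eq: "i < n \<Longrightarrow> j < n \<Longrightarrow> D0 i j = (if j = i then c i else 0)"
  using D0_offdiag c_D0 by auto

lemma det_Mi0: "i < n \<Longrightarrow> det (Mi n lam N i lam 0) = 0"
  by (subst det_diag_mat[OF Mi_carrier]) (auto simp: Mi_index prod_zero_iff)

definition box :: "real \<Rightarrow> (nat \<Rightarrow> real) set" where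
  "box \<delta> = {w. \<forall>a<n. \<bar>w a - lam a\<bar> \<le> \<delta>}"

lemma Mi_bounds:
  assumes i: "i < n" and w: "w \<in> box \<delta>" and d1: "\<delta> \<le> 1" and t1: "\<bar>t\<bar> \<le> 1"
  shows "\<And>a b. a < n \<Longrightarrow> b < n \<Longrightarrow> \<bar>Mi n lam N i lam 0 $$ (a,b)\<bar> \<le> K \<and> \<bar>Mi n lam N i w t $$ (a,b)\<bar> \<le> K
     \<and> \<bar>Mi n lam N i lam 0 $$ (a,b) - Mi n lam N i w t $$ (a,b)\<bar> \<le> \<delta> + \<bar>t\<bar> * K0"
proof -
  fix a b assume a: "a < n" and b: "b < n"
  have wa: "\<bar>w a - lam a\<bar> \<le> \<delta>" using w a unfolding box_def by auto
  have la: "\<bar>lam i - lam a\<bar> \<le> Lam" by (rule Lam_ge[OF i a])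
  have tN: "\<bar>t * N a b\<bar> \<le> K0"
  proof -
    have "\<bar>t * N a b\<bar> = \<bar>t\<bar> * \<bar>N a b\<bar>" by (simp add: abs_mult)
    also have "\<dots> \<le> 1 * K0" by (intro mult_mono t1 K0) auto
    finally show ?thesis by simp
  qed
  have tN2: "\<bar>t * N a b\<bar> \<le> \<bar>t\<bar> * K0" by (simp add: abs_mult mult_left_mono K0)
  have d0: "0 \<le> \<delta>" using wa by linarith
  show "\<bar>Mi n lam N i lam 0 $$ (a,b)\<bar> \<le> K \<and> \<bar>Mi n lam N i w t $$ (a,b)\<bar> \<le> K
     \<and> \<bar>Mi n lam N i lam 0 $$ (a,b) - Mi n lam N i w t $$ (a,b)\<bar> \<le> \<delta> + \<bar>t\<bar> * K0"
    using a b wa la tN tN2 d1 d0 K0_nonneg Lam_nonneg unfolding K_def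
    by (auto simp: Mi_index abs_le_iff)
qed

end

context base_setup begin

lemma hyb_box: "x \<in> box \<delta> \<Longrightarrow> y \<in> box \<delta> \<Longrightarrow> hyb x y j \<in> box \<delta>"
  unfolding box_def hyb_def by auto

lemma lam_box: "0 \<le> \<delta> \<Longrightarrow> lam \<in> box \<delta>" unfolding box_def by auto

lemma D_close:
  assumes i: "i < n" and j: "j < n" and w: "w \<in> box \<delta>" and d1: "\<delta> \<le> 1" and t1: "\<bar>t\<bar> \<le> 1"
  shows "\<bar>D0 i j - det (mat_delete (Mi n lam N i w t) j j)\<bar> \<le> L0 * (\<delta> + \<bar>t\<bar> * K0)"
proof -
  have "\<bar>w i - lam i\<bar> \<le> \<delta>" using w i unfolding box_def by auto
  hence d0: "0 \<le> \<delta>" by linarith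
  show ?thesis unfolding D0_def L0_def
    by (rule det_lip_delete[OF Mi_carrier Mi_carrier j Mi_bounds[OF i w d1 t1] K_ge1])
       (use d0 K0_nonneg in auto)
qed

lemma Phi_lip:
  assumes x: "x \<in> box \<delta>" and y: "y \<in> box \<delta>" and d1: "\<delta> \<le> 1" and t1: "\<bar>t\<bar> \<le> 1"
    and rho: "\<And>a. a < n \<Longrightarrow> \<bar>x a - y a\<bar> \<le> \<rho>"
    and cm: "0 < cm" "\<And>i. i < n \<Longrightarrow> cm \<le> \<bar>c i\<bar>"
    and small: "real n * (L0 * (\<delta> + \<bar>t\<bar> * K0)) \<le> cm / 2"
    and i: "i < n"
  shows "\<bar>Phi n lam N c t x i - Phi n lam N c t y i\<bar> \<le> \<rho> / 2"
proof -
  let ?D = "\<lambda>j. det (mat_delete (Mi n lam N i (hyb x y j) t) j j)"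
  let ?e = "L0 * (\<delta> + \<bar>t\<bar> * K0)"
  have ci: "c i \<noteq> 0" by (rule c_nonzero[OF i])
  have rho0: "0 \<le> \<rho>" using rho[OF i] by linarith
  have s1: "x i - y i = (\<Sum>j<n. (x j - y j) * D0 i j / c i)"
  proof -
    have "(\<Sum>j<n. (x j - y j) * D0 i j / c i) = (\<Sum>j<n. if j = i then x i - y i else 0)"
      by (rule sum.cong) (use ci i in \<open>auto simp: D0_eq\<close>)
    also have "\<dots> = x i - y i" using i by simp
    finally show ?thesis by simp
  qed
  have "Phi n lam N c t x i - Phi n lam N c t y i = (x i - y i) + (det (Mi n lam N i x t) - det (Mi n lam N i y t)) / c i"
    unfolding Phi_def by (simp add: diff_divide_distrib)
  also have "\<dots> = (\<Sum>j<n. (x j - y j) * D0 i j / c i) + (\<Sum>j<n. (y j - x j) * ?D j) / c i"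
    unfolding Mi_telescope s1 ..
  also have "\<dots> = (\<Sum>j<n. (x j - y j) * ((D0 i j - ?D j) / c i))"
    unfolding sum_divide_distrib sum.distrib[symmetric] by (rule sum.cong) (use ci in \<open>auto simp: field_simps\<close>)
  finally have eq: "Phi n lam N c t x i - Phi n lam N c t y i = (\<Sum>j<n. (x j - y j) * ((D0 i j - ?D j) / c i))" .
  have "\<bar>\<Sum>j<n. (x j - y j) * ((D0 i j - ?D j) / c i)\<bar> \<le> (\<Sum>j<n. \<bar>(x j - y j) * ((D0 i j - ?D j) / c i)\<bar>)"
    by (rule sum_abs)
  also have "\<dots> \<le> (\<Sum>j<n. \<rho> * (?e / cm))"
  proof (rule sum_mono)
    fix j assume "j \<in> {..<n}"
    hence j: "j < n" by simp
    have "\<bar>D0 i j - ?D j\<bar> \<le> ?e" by (rule D_close[OF i j hyb_box[OF x y] d1 t1])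
    moreover have "\<bar>c i\<bar> \<ge> cm" using cm(2)[OF i] .
    ultimately have "\<bar>D0 i j - ?D j\<bar> / \<bar>c i\<bar> \<le> ?e / cm"
      using cm(1) by (meson abs_ge_zero frac_le order_trans)
    hence "\<bar>(D0 i j - ?D j) / c i\<bar> \<le> ?e / cm" by (simp add: abs_divide)
    thus "\<bar>(x j - y j) * ((D0 i j - ?D j) / c i)\<bar> \<le> \<rho> * (?e / cm)"
      unfolding abs_mult by (intro mult_mono rho j) (use rho0 in auto)
  qed
  also have "\<dots> = \<rho> * (real n * ?e / cm)" by simp
  also have "\<dots> \<le> \<rho> * (1/2)"
  proof (rule mult_left_mono[OF _ rho0])
    show "real n * ?e / cm \<le> 1/2" using small cm(1) by (simp add: divide_simps)
  qed
  finally show ?thesis using eq by simp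
qed

lemma Phi_box:
  assumes x: "x \<in> box \<delta>" and d1: "\<delta> \<le> 1" and t1: "\<bar>t\<bar> \<le> 1"
    and cm: "0 < cm" "\<And>i. i < n \<Longrightarrow> cm \<le> \<bar>c i\<bar>"
    and small: "real n * (L0 * (\<delta> + \<bar>t\<bar> * K0)) \<le> cm / 2"
    and small2: "L0 * (\<bar>t\<bar> * K0) \<le> cm * \<delta> / 2"
  shows "Phi n lam N c t x \<in> box \<delta>"
  unfolding box_def
proof (intro CollectI allI impI)
  fix i assume i: "i < n"
  have "\<bar>x i - lam i\<bar> \<le> \<delta>" using x i unfolding box_def by auto
  hence d0: "0 \<le> \<delta>" by linarith
  have l1: "\<bar>Phi n lam N c t x i - Phi n lam N c t lam i\<bar> \<le> \<delta> / 2"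
    by (rule Phi_lip[OF x lam_box[OF d0] d1 t1 _ cm small i]) (use x in \<open>auto simp: box_def\<close>)
  have "\<bar>det (Mi n lam N i lam 0) - det (Mi n lam N i lam t)\<bar> \<le> fact n * (real n * K ^ n * (0 + \<bar>t\<bar> * K0))"
    by (rule det_lip[OF Mi_carrier Mi_carrier Mi_bounds[OF i lam_box[of 0] _ t1] K_ge1]) (use K0_nonneg in auto)
  hence "\<bar>det (Mi n lam N i lam t)\<bar> \<le> L0 * (\<bar>t\<bar> * K0)" unfolding det_Mi0[OF i] L0_def by (simp add: algebra_simps)
  hence "\<bar>det (Mi n lam N i lam t)\<bar> \<le> cm * \<delta> / 2" using small2 by linarith
  hence "\<bar>det (Mi n lam N i lam t)\<bar> / \<bar>c i\<bar> \<le> (cm * \<delta> / 2) / cm"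
    using cm[OF ] cm(2)[OF i] by (meson abs_ge_zero frac_le order_trans)
  hence l2: "\<bar>Phi n lam N c t lam i - lam i\<bar> \<le> \<delta> / 2"
    using cm(1) by (simp add: Phi_def abs_divide)
  show "\<bar>Phi n lam N c t x i - lam i\<bar> \<le> \<delta>" using l1 l2 by linarith
qed

end

lemma fixpoint_box:
  fixes F :: "(nat \<Rightarrow> real) \<Rightarrow> (nat \<Rightarrow> real)" and z :: "nat \<Rightarrow> real"
  assumes maps: "\<And>x. (\<forall>a<n. \<bar>x a - z a\<bar> \<le> \<delta>) \<Longrightarrow> (\<forall>a<n. \<bar>F x a - z a\<bar> \<le> \<delta>)"
    and lip: "\<And>x y \<rho> a. (\<forall>a<n. \<bar>x a - z a\<bar> \<le> \<delta>) \<Longrightarrow> (\<forall>a<n. \<bar>y a - z a\<bar> \<le> \<delta>) \<Longrightarrow>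
        (\<forall>a<n. \<bar>x a - y a\<bar> \<le> \<rho>) \<Longrightarrow> a < n \<Longrightarrow> \<bar>F x a - F y a\<bar> \<le> \<rho> / 2"
    and d0: "0 \<le> \<delta>"
  shows "\<exists>X. (\<forall>a<n. \<bar>X a - z a\<bar> \<le> \<delta>) \<and> (\<forall>a<n. F X a = X a)"
proof -
  define B where "B = {w. \<forall>a<n. \<bar>w a - z a\<bar> \<le> \<delta>}"
  define xs where "xs k = (F ^^ k) z" for k
  have xsS: "xs (Suc k) = F (xs k)" for k by (simp add: xs_def)
  have inB: "xs k \<in> B" for k
  proof (induction k)
    case 0 thus ?case using d0 by (simp add: xs_def B_def)
  next
    case (Suc k) thus ?case using maps by (simp add: xsS B_def)
  qed
  have B2: "x \<in> B \<Longrightarrow> y \<in> B \<Longrightarrow> a < n \<Longrightarrow> \<bar>x a - y a\<bar> \<le> 2 * \<delta>" for x y a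
    unfolding B_def by (smt (verit, best) mem_Collect_eq)
  have tail: "\<forall>l a. a < n \<longrightarrow> \<bar>xs (k + l) a - xs k a\<bar> \<le> 2 * \<delta> * (1/2)^k" for k
  proof (induction k)
    case 0 show ?case using B2 inB by simp
  next
    case (Suc k)
    show ?case
    proof (intro allI impI)
      fix l a assume a: "a < n"
      have "\<bar>F (xs (k + l)) a - F (xs k) a\<bar> \<le> (2 * \<delta> * (1/2)^k) / 2"
        by (rule lip) (use inB Suc a in \<open>auto simp: B_def\<close>)
      thus "\<bar>xs (Suc k + l) a - xs (Suc k) a\<bar> \<le> 2 * \<delta> * (1 / 2) ^ Suc k"
        by (simp add: xsS)
    qed
  qed
  have geo: "(\<lambda>k. 2 * \<delta> * (1/2::real)^k) \<longlonglongrightarrow> 0"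
    by (intro tendsto_mult_right_zero LIMSEQ_power_zero) auto
  have conv: "convergent (\<lambda>k. xs k a)" if a: "a < n" for a
  proof -
    have "Cauchy (\<lambda>k. xs k a)"
    proof (rule metric_CauchyI)
      fix e :: real assume e: "0 < e"
      from geo e obtain M where M: "\<And>k. k \<ge> M \<Longrightarrow> \<bar>2 * \<delta> * (1/2::real)^k\<bar> < e/2"
        unfolding LIMSEQ_def dist_real_def by (metis diff_zero half_gt_zero)
      show "\<exists>M. \<forall>m\<ge>M. \<forall>na\<ge>M. dist (xs m a) (xs na a) < e"
      proof (intro exI allI impI)
        fix m k assume m: "m \<ge> M" and k: "k \<ge> M"
        have "\<bar>xs (M + (m - M)) a - xs M a\<bar> \<le> 2 * \<delta> * (1/2)^M" using tail a by blast
        moreover have "\<bar>xs (M + (k - M)) a - xs M a\<bar> \<le> 2 * \<delta> * (1/2)^M" using tail a by blast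
        moreover have "\<bar>2 * \<delta> * (1/2::real)^M\<bar> < e/2" using M by simp
        ultimately show "dist (xs m a) (xs k a) < e"
          using m k unfolding dist_real_def by simp
      qed
    qed
    thus ?thesis by (simp add: Cauchy_convergent_iff)
  qed
  define X where "X a = lim (\<lambda>k. xs k a)" for a
  have limX: "(\<lambda>k. xs k a) \<longlonglongrightarrow> X a" if "a < n" for a
    using conv[OF that] unfolding X_def by (simp add: convergent_LIMSEQ_iff)
  have XB: "\<forall>a<n. \<bar>X a - z a\<bar> \<le> \<delta>"
  proof (intro allI impI)
    fix a assume a: "a < n"
    have "(\<lambda>k. \<bar>xs k a - z a\<bar>) \<longlonglongrightarrow> \<bar>X a - z a\<bar>"
      by (intro tendsto_intros limX[OF a])
    moreover have "\<forall>k. \<bar>xs k a - z a\<bar> \<le> \<delta>" using inB a by (auto simp: B_def)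
    ultimately show "\<bar>X a - z a\<bar> \<le> \<delta>" by (meson LIMSEQ_le_const2)
  qed
  have Xtail: "\<bar>X a - xs k a\<bar> \<le> 2 * \<delta> * (1/2)^k" if a: "a < n" for a k
  proof -
    have "(\<lambda>l. xs (k + l) a) \<longlonglongrightarrow> X a"
      using LIMSEQ_ignore_initial_segment[OF limX[OF a], of k] by (simp add: add.commute)
    hence "(\<lambda>l. \<bar>xs (k + l) a - xs k a\<bar>) \<longlonglongrightarrow> \<bar>X a - xs k a\<bar>" by (intro tendsto_intros)
    moreover have "\<forall>l. \<bar>xs (k + l) a - xs k a\<bar> \<le> 2 * \<delta> * (1/2)^k" using tail a by blast
    ultimately show ?thesis by (meson LIMSEQ_le_const2)
  qed
  have fxp: "F X a = X a" if a: "a < n" for a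
  proof -
    have bnd: "\<bar>F X a - xs (Suc k) a\<bar> \<le> (2 * \<delta> * (1/2)^k) / 2" for k
      unfolding xsS
      by (rule lip) (use XB inB Xtail a in \<open>auto simp: B_def\<close>)
    have g2: "(\<lambda>k. (2 * \<delta> * (1/2::real)^k) / 2) \<longlonglongrightarrow> 0"
      using tendsto_divide_zero[OF geo, of 2] by simp
    have "(\<lambda>k. xs (Suc k) a - F X a) \<longlonglongrightarrow> 0"
    proof (rule tendsto_0_le[OF g2, where K = 1])
      show "\<forall>\<^sub>F k in sequentially. norm (xs (Suc k) a - F X a) \<le> norm ((2 * \<delta> * (1/2::real)^k) / 2) * 1"
        using bnd d0 by (simp add: abs_minus_commute)
    qed
    hence "(\<lambda>k. (xs (Suc k) a - F X a) + F X a) \<longlonglongrightarrow> 0 + F X a" by (intro tendsto_add) auto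
    hence "(\<lambda>k. xs (Suc k) a) \<longlonglongrightarrow> F X a" by simp
    moreover have "(\<lambda>k. xs (Suc k) a) \<longlonglongrightarrow> X a" using limX[OF a] by (rule LIMSEQ_Suc)
    ultimately show ?thesis by (rule LIMSEQ_unique)
  qed
  show ?thesis using XB fxp by blast
qed

definition Zi :: "nat \<Rightarrow> (nat \<Rightarrow> real) \<Rightarrow> (nat \<Rightarrow> nat \<Rightarrow> real) \<Rightarrow> nat \<Rightarrow> (nat \<Rightarrow> real) \<Rightarrow> real \<Rightarrow> real mat" where
  "Zi n lam N i w t = mat n n (\<lambda>(a,b). if a = i \<and> b = i then 0 else if a = i then - N i b
      else if b = i then - N a i else if a = b then lam i - w a else - (t * N a b))"

lemma Zi_carrier[simp]: "Zi n lam N i w t \<in> carrier_mat n n" by (simp add: Zi_def)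
lemma Zi_dim[simp]: "dim_row (Zi n lam N i w t) = n" "dim_col (Zi n lam N i w t) = n" by (simp_all add: Zi_def)
lemma Zi_index: "a < n \<Longrightarrow> b < n \<Longrightarrow> Zi n lam N i w t $$ (a,b) = (if a = i \<and> b = i then 0 else if a = i then - N i b
      else if b = i then - N a i else if a = b then lam i - w a else - (t * N a b))"
  by (simp add: Zi_def)

lemma Mi_Zi:
  assumes i: "i < n" and wi: "w i = lam i"
  shows "det (Mi n lam N i w t) = t^2 * det (Zi n lam N i w t)"
proof -
  let ?Z = "Zi n lam N i w t"
  have eq: "Mi n lam N i w t = multrow i t (transpose_mat (multrow i t (transpose_mat ?Z)))"
    by (rule eq_matI) (auto simp: Mi_index Zi_index wi)
  have c1: "transpose_mat ?Z \<in> carrier_mat n n" by simp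
  have c2: "multrow i t (transpose_mat ?Z) \<in> carrier_mat n n" by simp
  have c3: "transpose_mat (multrow i t (transpose_mat ?Z)) \<in> carrier_mat n n" by simp
  show ?thesis unfolding eq det_multrow[OF i c3] det_transpose[OF c2] det_multrow[OF i c1] det_transpose[OF Zi_carrier]
    by (simp add: power2_eq_square)
qed

context base_setup begin

lemma Zi_bounds:
  assumes i: "i < n" and w: "w \<in> box \<delta>" and d1: "\<delta> \<le> 1" and t1: "\<bar>t\<bar> \<le> 1"
  shows "\<And>a b. a < n \<Longrightarrow> b < n \<Longrightarrow> \<bar>Zi n lam N i lam 0 $$ (a,b)\<bar> \<le> K \<and> \<bar>Zi n lam N i w t $$ (a,b)\<bar> \<le> K
     \<and> \<bar>Zi n lam N i lam 0 $$ (a,b) - Zi n lam N i w t $$ (a,b)\<bar> \<le> \<delta> + \<bar>t\<bar> * K0"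
proof -
  fix a b assume a: "a < n" and b: "b < n"
  have wa: "\<bar>w a - lam a\<bar> \<le> \<delta>" using w a unfolding box_def by auto
  have la: "\<bar>lam i - lam a\<bar> \<le> Lam" by (rule Lam_ge[OF i a])
  have tN: "\<bar>t * N a b\<bar> \<le> K0"
  proof -
    have "\<bar>t * N a b\<bar> = \<bar>t\<bar> * \<bar>N a b\<bar>" by (simp add: abs_mult)
    also have "\<dots> \<le> 1 * K0" by (intro mult_mono t1 K0) auto
    finally show ?thesis by simp
  qed
  have tN2: "\<bar>t * N a b\<bar> \<le> \<bar>t\<bar> * K0" by (simp add: abs_mult mult_left_mono K0)
  have d0: "0 \<le> \<delta>" using wa by linarith
  have n1: "\<bar>N i b\<bar> \<le> K0" "\<bar>N a i\<bar> \<le> K0" by (rule K0)+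
  show "\<bar>Zi n lam N i lam 0 $$ (a,b)\<bar> \<le> K \<and> \<bar>Zi n lam N i w t $$ (a,b)\<bar> \<le> K
     \<and> \<bar>Zi n lam N i lam 0 $$ (a,b) - Zi n lam N i w t $$ (a,b)\<bar> \<le> \<delta> + \<bar>t\<bar> * K0"
    using a b wa la tN tN2 d1 d0 K0_nonneg Lam_nonneg n1 unfolding K_def
    by (auto simp: Zi_index abs_le_iff)
qed

lemma Zi0_nonsingular:
  assumes i: "i < n" and g: "(\<Sum>b<n. N i b * N b i / (lam i - lam b)) \<noteq> 0"
  shows "det (Zi n lam N i lam 0) \<noteq> 0"
proof
  assume "det (Zi n lam N i lam 0) = 0"
  then obtain v where v: "v \<in> carrier_vec n" "v \<noteq> 0\<^sub>v n" "Zi n lam N i lam 0 *\<^sub>v v = 0\<^sub>v n"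
    using det_0_iff_vec_prod_zero[OF Zi_carrier] by blast
  let ?Z = "Zi n lam N i lam 0"
  have row: "(\<Sum>b<n. ?Z $$ (a,b) * v $ b) = 0" if a: "a < n" for a
  proof -
    have "(?Z *\<^sub>v v) $ a = 0" using v(3) a by simp
    thus ?thesis using a v(1) by (simp add: scalar_prod_def row_def atLeast0LessThan)
  qed
  have va: "v $ a = N a i * v $ i / (lam i - lam a)" if a: "a < n" and ai: "a \<noteq> i" for a
  proof -
    have "(\<Sum>b<n. ?Z $$ (a,b) * v $ b) = (\<Sum>b<n. (if b = i then - N a i * v $ i else 0) + (if b = a then (lam i - lam a) * v $ a else 0))"
      by (rule sum.cong) (use a ai in \<open>auto simp: Zi_index\<close>)
    also have "\<dots> = - N a i * v $ i + (lam i - lam a) * v $ a"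
      using a i by (simp add: sum.distrib)
    finally have "- N a i * v $ i + (lam i - lam a) * v $ a = 0" using row[OF a] by simp
    moreover have "lam i - lam a \<noteq> 0" using lam_dist[OF i a] ai by auto
    ultimately show ?thesis by (simp add: field_simps)
  qed
  have "(\<Sum>b<n. ?Z $$ (i,b) * v $ b) = (\<Sum>b<n. - (v $ i * (N i b * N b i / (lam i - lam b))))"
  proof (rule sum.cong)
    fix b assume "b \<in> {..<n}"
    hence b: "b < n" by simp
    show "?Z $$ (i,b) * v $ b = - (v $ i * (N i b * N b i / (lam i - lam b)))"
    proof (cases "b = i")
      case True thus ?thesis using i by (simp add: Zi_index)
    next
      case False thus ?thesis using i b by (simp add: Zi_index va)
    qed
  qed simp
  also have "\<dots> = - (v $ i * (\<Sum>b<n. N i b * N b i / (lam i - lam b)))"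
    by (simp add: sum_negf sum_distrib_left)
  finally have "v $ i * (\<Sum>b<n. N i b * N b i / (lam i - lam b)) = 0" using row[OF i] by simp
  hence vi: "v $ i = 0" using g by simp
  have "v = 0\<^sub>v n"
  proof (rule eq_vecI)
    fix a assume "a < dim_vec (0\<^sub>v n)"
    hence a: "a < n" by simp
    show "v $ a = 0\<^sub>v n $ a" using a vi va[OF a] by (cases "a = i") auto
  qed (use v(1) in simp)
  with v(2) show False by simp
qed

end

context base_setup begin

lemma base_exists:
  assumes n1: "1 \<le> n"
    and g: "\<And>i. i < n \<Longrightarrow> (\<Sum>b<n. N i b * N b i / (lam i - lam b)) \<noteq> 0"
    and F: "finite F"
  shows "\<exists>x t. t \<noteq> 0 \<and> (\<forall>i<n. det (Mi n lam N i x t) = 0) \<and> (\<forall>i<n. x i \<notin> F)"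
proof -
  define cm where "cm = Min ((\<lambda>i. \<bar>c i\<bar>) ` {..<n})"
  define zm where "zm = Min ((\<lambda>i. \<bar>det (Zi n lam N i lam 0)\<bar>) ` {..<n})"
  define S where "S = (\<lambda>(f,i). \<bar>f - lam i\<bar>) ` {(f,i). f \<in> F \<and> i < n \<and> f \<noteq> lam i}"
  define dF where "dF = Min (insert 1 S)"
  define LL where "LL = L0 + 1"
  define e0 where "e0 = min (min 1 dF) (min (cm / (4 * real n * LL)) (zm / (2 * LL)))"
  define \<delta> where "\<delta> = e0 / 2"
  define Q where "Q = 1 + K0 + 2 * LL * K0 / cm"
  define t where "t = \<delta> / Q"
  have ne: "{..<n} \<noteq> {}" using n1 by (metis lessThan_empty_iff not_one_le_zero)
  have cm_le: "\<And>i. i < n \<Longrightarrow> cm \<le> \<bar>c i\<bar>" unfolding cm_def by (intro Min_le) auto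
  have cm_pos: "0 < cm" unfolding cm_def using ne c_nonzero by (subst Min_gr_iff) auto
  have zm_le: "\<And>i. i < n \<Longrightarrow> zm \<le> \<bar>det (Zi n lam N i lam 0)\<bar>" unfolding zm_def by (intro Min_le) auto
  have zm_pos: "0 < zm" unfolding zm_def using ne Zi0_nonsingular g by (subst Min_gr_iff) auto
  have finS: "finite S"
  proof -
    have "{(f,i). f \<in> F \<and> i < n \<and> f \<noteq> lam i} \<subseteq> F \<times> {..<n}" by auto
    hence "finite {(f,i). f \<in> F \<and> i < n \<and> f \<noteq> lam i}" using F by (meson finite_SigmaI finite_lessThan finite_subset)
    thus ?thesis unfolding S_def by simp
  qed
  have dF_pos: "0 < dF" unfolding dF_def using finS by (subst Min_gr_iff) (auto simp: S_def)
  have dF_le: "\<And>f i. f \<in> F \<Longrightarrow> i < n \<Longrightarrow> f \<noteq> lam i \<Longrightarrow> dF \<le> \<bar>f - lam i\<bar>"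
    unfolding dF_def using finS by (intro Min_le) (auto simp: S_def)
  have LL_pos: "0 < LL" unfolding LL_def using L0_nonneg by simp
  have npos: "0 < real n" using n1 by simp
  have e0_pos: "0 < e0" unfolding e0_def using dF_pos cm_pos zm_pos LL_pos npos by auto
  have e0_1: "e0 \<le> 1" and e0_dF: "e0 \<le> dF" and e0_cm: "e0 \<le> cm / (4 * real n * LL)" and e0_zm: "e0 \<le> zm / (2 * LL)"
    unfolding e0_def by auto
  have d_pos: "0 < \<delta>" and d1: "\<delta> \<le> 1" and d_dF: "\<delta> < dF" using e0_pos e0_1 e0_dF by (auto simp: \<delta>_def)
  have Q1: "1 \<le> Q" and QK: "K0 \<le> Q" and QL: "2 * LL * K0 / cm \<le> Q"
    unfolding Q_def using K0_nonneg LL_pos cm_pos by auto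
  have t_pos: "0 < t" unfolding t_def using d_pos Q1 by simp
  have t_le: "t \<le> \<delta>" unfolding t_def using d_pos Q1 by (simp add: divide_le_eq)
  have t1: "\<bar>t\<bar> \<le> 1" using t_pos t_le d1 by simp
  have tK: "t * K0 \<le> \<delta>"
  proof -
    have "t * K0 = \<delta> * (K0 / Q)" unfolding t_def by simp
    also have "\<dots> \<le> \<delta> * 1" using QK Q1 d_pos by (intro mult_left_mono) auto
    finally show ?thesis by simp
  qed
  have eta: "\<delta> + \<bar>t\<bar> * K0 \<le> e0" using tK t_pos unfolding \<delta>_def by simp
  have L0e: "L0 * (\<delta> + \<bar>t\<bar> * K0) \<le> LL * e0"
    using eta L0_nonneg e0_pos d_pos K0_nonneg unfolding LL_def by (intro mult_mono) auto
  have small: "real n * (L0 * (\<delta> + \<bar>t\<bar> * K0)) \<le> cm / 2"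
  proof -
    have "real n * (L0 * (\<delta> + \<bar>t\<bar> * K0)) \<le> real n * (LL * e0)" using L0e npos by simp
    also have "\<dots> \<le> real n * (LL * (cm / (4 * real n * LL)))" using e0_cm npos LL_pos
      by (intro mult_left_mono) auto
    also have "\<dots> = cm / 4" using npos LL_pos by simp
    finally show ?thesis using cm_pos by simp
  qed
  have small2: "L0 * (\<bar>t\<bar> * K0) \<le> cm * \<delta> / 2"
  proof -
    have "L0 * (\<bar>t\<bar> * K0) \<le> LL * (t * K0)" using t_pos K0_nonneg unfolding LL_def
      by (simp add: mult_nonneg_nonneg distrib_right)
    also have "\<dots> = \<delta> * (LL * K0 / Q)" unfolding t_def by simp
    also have "\<dots> \<le> \<delta> * (cm / 2)"
    proof (rule mult_left_mono)
      have "LL * K0 / Q \<le> LL * K0 / (2 * LL * K0 / cm)" if "K0 > 0"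
        using QL that LL_pos cm_pos Q1 by (intro divide_left_mono) auto
      moreover have "LL * K0 / (2 * LL * K0 / cm) = cm / 2" if "K0 > 0" using that LL_pos by simp
      ultimately show "LL * K0 / Q \<le> cm / 2" using K0_nonneg cm_pos Q1
      proof (cases "K0 = 0")
        case False
        hence "K0 > 0" using K0_nonneg by simp
        thus ?thesis using \<open>K0 > 0 \<Longrightarrow> LL * K0 / Q \<le> LL * K0 / (2 * LL * K0 / cm)\<close>
          \<open>K0 > 0 \<Longrightarrow> LL * K0 / (2 * LL * K0 / cm) = cm / 2\<close> by linarith
      qed simp
    qed (use d_pos in auto)
    finally show ?thesis by (simp add: mult.commute)
  qed
  have zsmall: "L0 * (\<delta> + \<bar>t\<bar> * K0) < zm"
  proof -
    have "L0 * (\<delta> + \<bar>t\<bar> * K0) \<le> LL * (zm / (2 * LL))" using L0e e0_zm LL_pos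
      by (meson mult_left_mono less_imp_le order_trans)
    also have "\<dots> = zm / 2" using LL_pos by simp
    finally show ?thesis using zm_pos by simp
  qed
  define B where "B = box \<delta>"
  obtain X where XB: "\<forall>a<n. \<bar>X a - lam a\<bar> \<le> \<delta>" and Xfix: "\<forall>a<n. Phi n lam N c t X a = X a"
  proof -
    have "\<exists>X. (\<forall>a<n. \<bar>X a - lam a\<bar> \<le> \<delta>) \<and> (\<forall>a<n. Phi n lam N c t X a = X a)"
    proof (rule fixpoint_box)
      fix x assume "\<forall>a<n. \<bar>x a - lam a\<bar> \<le> \<delta>"
      hence "x \<in> box \<delta>" by (simp add: box_def)
      hence "Phi n lam N c t x \<in> box \<delta>" by (rule Phi_box[OF _ d1 t1 cm_pos cm_le small small2])
      thus "\<forall>a<n. \<bar>Phi n lam N c t x a - lam a\<bar> \<le> \<delta>" by (simp add: box_def)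
    next
      fix x y \<rho> a assume "\<forall>a<n. \<bar>x a - lam a\<bar> \<le> \<delta>" "\<forall>a<n. \<bar>y a - lam a\<bar> \<le> \<delta>" "\<forall>a<n. \<bar>x a - y a\<bar> \<le> \<rho>" "a < n"
      thus "\<bar>Phi n lam N c t x a - Phi n lam N c t y a\<bar> \<le> \<rho> / 2"
        by (intro Phi_lip[OF _ _ d1 t1 _ cm_pos cm_le small]) (auto simp: box_def)
    qed (use d_pos in simp)
    thus ?thesis using that by blast
  qed
  have Xbox: "X \<in> box \<delta>" using XB by (simp add: box_def)
  have detz: "det (Mi n lam N i X t) = 0" if i: "i < n" for i
  proof -
    have "X i + det (Mi n lam N i X t) / c i = X i" using Xfix i by (simp add: Phi_def)
    thus ?thesis using c_nonzero[OF i] by simp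
  qed
  have notF: "X i \<notin> F" if i: "i < n" for i
  proof
    assume XF: "X i \<in> F"
    show False
    proof (cases "X i = lam i")
      case True
      have "t^2 * det (Zi n lam N i X t) = 0" using Mi_Zi[of i n X lam N t, OF i True] detz[OF i] by simp
      hence z0: "det (Zi n lam N i X t) = 0" using t_pos by simp
      have "\<bar>det (Zi n lam N i lam 0) - det (Zi n lam N i X t)\<bar> \<le> fact n * (real n * K ^ n * (\<delta> + \<bar>t\<bar> * K0))"
        by (rule det_lip[OF Zi_carrier Zi_carrier Zi_bounds[OF i Xbox d1 t1] K_ge1]) (use d_pos K0_nonneg in auto)
      hence "\<bar>det (Zi n lam N i lam 0)\<bar> \<le> L0 * (\<delta> + \<bar>t\<bar> * K0)" unfolding z0 L0_def by (simp add: algebra_simps)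
      thus False using zsmall zm_le[OF i] by simp
    next
      case False
      have "dF \<le> \<bar>X i - lam i\<bar>" by (rule dF_le[OF XF i False])
      thus False using XB i d_dF by force
    qed
  qed
  show ?thesis using t_pos detz notF by (intro exI[of _ X] exI[of _ t]) auto
qed

end

lemma poly_eq_roots:
  fixes p :: "real poly" and lam :: "nat \<Rightarrow> real"
  assumes deg: "degree p = n" "coeff p n = 1"
    and roots: "\<And>i. i < n \<Longrightarrow> poly p (lam i) = 0"
    and dist: "\<And>i j. i < n \<Longrightarrow> j < n \<Longrightarrow> i \<noteq> j \<Longrightarrow> lam i \<noteq> lam j"
  shows "p = (\<Prod>i=0..<n. [:- lam i, 1:])"
proof (rule ccontr)
  let ?q = "(\<Prod>i=0..<n. [:- lam i, 1:])"
  assume ne: "p \<noteq> ?q"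
  have q: "degree ?q = n \<and> coeff ?q n = 1" by (rule degree_prod_monic) auto
  define d where "d = p - ?q"
  have d0: "d \<noteq> 0" using ne unfolding d_def by simp
  have cn: "coeff d k = 0" if "k \<ge> n" for k
  proof (cases "k = n")
    case True thus ?thesis using deg q unfolding d_def by simp
  next
    case False
    hence "k > n" using that by simp
    hence "coeff p k = 0" "coeff ?q k = 0" using deg q by (auto intro: coeff_eq_0)
    thus ?thesis unfolding d_def by simp
  qed
  have degd: "degree d < n"
  proof (rule ccontr)
    assume "\<not> degree d < n"
    hence "coeff d (degree d) = 0" using cn by simp
    thus False using d0 by simp
  qed
  have sub: "lam ` {..<n} \<subseteq> {x. poly d x = 0}"
    using roots q by (force simp: d_def poly_prod prod_zero_iff)
  have "card (lam ` {..<n}) = n"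
    by (subst card_image) (auto intro!: inj_onI dest: dist)
  moreover have "card (lam ` {..<n}) \<le> card {x. poly d x = 0}"
    by (rule card_mono[OF poly_roots_finite[OF d0] sub])
  moreover have "card {x. poly d x = 0} \<le> degree d" by (rule poly_roots_degree[OF d0])
  ultimately show False using degd by simp
qed

lemma base_matrix:
  fixes lam :: "nat \<Rightarrow> real"
  assumes sg: "simple_graph n E"
    and nb: "\<And>i. i < n \<Longrightarrow> \<exists>j<n. E i j"
    and dist: "\<And>i j. i < n \<Longrightarrow> j < n \<Longrightarrow> i \<noteq> j \<Longrightarrow> lam i \<noteq> lam j"
    and n1: "1 \<le> n" and F: "finite F"
  shows "\<exists>A \<in> S_graph n E. char_poly A = (\<Prod>i=0..<n. [:- lam i, 1:]) \<and> (\<forall>i<n. A $$ (i,i) \<notin> F)"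
proof -
  have Esym: "E a b \<Longrightarrow> E b a" and Ebnd: "E a b \<Longrightarrow> a < n \<and> b < n \<and> a \<noteq> b" for a b
    using sg unfolding simple_graph_def by blast+
  define p where "p i = (\<Sum>b<n. if E i b then monom (1 / (lam i - lam b)) (2 * (i + b)) else 0)" for i
  have p_ne: "p i \<noteq> 0" if i: "i < n" for i
  proof -
    obtain j where j: "j < n" "E i j" using nb[OF i] by blast
    have ij: "i \<noteq> j" using Ebnd[OF j(2)] by simp
    have "coeff (p i) (2 * (i + j)) = (\<Sum>b<n. if b = j then 1 / (lam i - lam j) else 0)"
      unfolding p_def coeff_sum by (rule sum.cong) (auto simp: coeff_monom j)
    also have "\<dots> = 1 / (lam i - lam j)" using j by simp
    also have "\<dots> \<noteq> 0" using dist[OF i j(1) ij] by simp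
    finally show ?thesis by auto
  qed
  have finR: "finite (\<Union>i<n. {s. poly (p i) s = 0})"
    using p_ne poly_roots_finite by auto
  obtain s :: real where s: "s \<notin> insert 0 (\<Union>i<n. {s. poly (p i) s = 0})"
    using ex_new_if_finite[OF infinite_UNIV_char_0, of "insert 0 (\<Union>i<n. {s. poly (p i) s = 0})"] finR by auto
  hence s0: "s \<noteq> 0" and sp: "\<And>i. i < n \<Longrightarrow> poly (p i) s \<noteq> 0" by auto
  define N where "N a b = (if E a b then s ^ (a + b) else 0)" for a b
  define K0 where "K0 = (\<Sum>a<n. \<Sum>b<n. \<bar>s\<bar> ^ (a + b))"
  have K0: "\<bar>N a b\<bar> \<le> K0" for a b
  proof (cases "E a b")
    case True
    hence a: "a < n" and b: "b < n" using Ebnd by auto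
    have "\<bar>N a b\<bar> = \<bar>s\<bar> ^ (a + b)" using True by (simp add: N_def power_abs)
    also have "\<dots> \<le> (\<Sum>b<n. \<bar>s\<bar> ^ (a + b))" by (rule member_le_sum) (use b in auto)
    also have "\<dots> \<le> K0" unfolding K0_def
      by (rule member_le_sum[where f = "\<lambda>a. \<Sum>b<n. \<bar>s\<bar> ^ (a + b)"]) (use a in \<open>auto intro: sum_nonneg\<close>)
    finally show ?thesis .
  next
    case False thus ?thesis by (simp add: N_def K0_def sum_nonneg)
  qed
  interpret base_setup n lam N K0 by unfold_locales (use dist K0 in auto)
  have g: "(\<Sum>b<n. N i b * N b i / (lam i - lam b)) \<noteq> 0" if i: "i < n" for i
  proof -
    have "(\<Sum>b<n. N i b * N b i / (lam i - lam b)) = poly (p i) s"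
      unfolding p_def poly_sum
      by (rule sum.cong) (auto simp: N_def poly_monom Esym power_add[symmetric] mult_2 add_ac)
    thus ?thesis using sp[OF i] by simp
  qed
  obtain x t where t0: "t \<noteq> 0" and detz: "\<forall>i<n. det (Mi n lam N i x t) = 0" and xF: "\<forall>i<n. x i \<notin> F"
    using base_exists[OF n1 g F] by blast
  define A where "A = mat n n (\<lambda>(a,b). if a = b then x a else t * N a b)"
  have A: "A \<in> carrier_mat n n" by (simp add: A_def)
  have Nsym: "N a b = N b a" for a b by (auto simp: N_def add.commute dest: Esym)
  have "A \<in> S_graph n E"
    unfolding S_graph_def
  proof (intro CollectI conjI A allI impI)
    show "A\<^sup>T = A" by (rule eq_matI) (auto simp: A_def Nsym)
    fix i j assume "i < n" "j < n" "i \<noteq> j"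
    thus "(A $$ (i, j) \<noteq> 0) = E i j" using t0 s0 by (auto simp: A_def N_def)
  qed
  moreover have "char_poly A = (\<Prod>i=0..<n. [:- lam i, 1:])"
  proof (rule poly_eq_roots)
    show "degree (char_poly A) = n" "coeff (char_poly A) n = 1" using degree_monic_char_poly[OF A] by auto
    show "lam i \<noteq> lam j" if "i < n" "j < n" "i \<noteq> j" for i j using dist that by auto
    fix i assume i: "i < n"
    have "- char_matrix A (lam i) = Mi n lam N i x t"
      by (rule eq_matI) (auto simp: char_matrix_def A_def Mi_index)
    thus "poly (char_poly A) (lam i) = 0" unfolding char_poly_matrix[OF A] using detz i by simp
  qed
  moreover have "\<forall>i<n. A $$ (i,i) \<notin> F" using xF by (simp add: A_def)
  ultimately show ?thesis by blast
qed

lemma mult_entry: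
  fixes A B :: "'a::comm_ring_1 mat"
  assumes "A \<in> carrier_mat n m" "B \<in> carrier_mat m p" "i < n" "j < p"
  shows "(A * B) $$ (i,j) = (\<Sum>l<m. A $$ (i,l) * B $$ (l,j))"
  using assms by (simp add: scalar_prod_def row_def col_def atLeast0LessThan)

lemma sum_two:
  fixes f :: "nat \<Rightarrow> real"
  assumes "v < K" "k < K" "v \<noteq> k"
  shows "(\<Sum>l<K. (if l = v then x else if l = k then y else 0) * f l) = x * f v + y * f k"
proof -
  have "(\<Sum>l<K. (if l = v then x else if l = k then y else 0) * f l) = (\<Sum>l<K. (if l = v then x * f v else 0) + (if l = k then y * f k else 0))"
    by (rule sum.cong) (use assms in auto)
  also have "\<dots> = x * f v + y * f k" using assms by (simp add: sum.distrib)
  finally show ?thesis .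
qed

lemma sum_one:
  fixes f :: "nat \<Rightarrow> real"
  assumes "i < K"
  shows "(\<Sum>l<K. (if l = i then 1 else 0) * f l) = f i"
proof -
  have "(\<Sum>l<K. (if l = i then 1 else 0) * f l) = (\<Sum>l<K. if l = i then f i else 0)"
    by (rule sum.cong) auto
  also have "\<dots> = f i" using assms by simp
  finally show ?thesis .
qed

lemma relabel_char_poly:
  fixes B :: "real mat"
  assumes B: "B \<in> carrier_mat m m" and pi: "bij_betw \<pi> {..<m} {..<m}"
  shows "char_poly (mat m m (\<lambda>(a,b). B $$ (\<pi> a, \<pi> b))) = char_poly B"
proof -
  define P :: "real mat" where "P = mat m m (\<lambda>(a,l). if l = \<pi> a then 1 else 0)"
  have P: "P \<in> carrier_mat m m" by (simp add: P_def)
  have PT: "P\<^sup>T \<in> carrier_mat m m" by (simp add: P_def)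
  have pim: "a < m \<Longrightarrow> \<pi> a < m" for a using pi by (auto simp: bij_betw_def)
  have pinj: "a < m \<Longrightarrow> b < m \<Longrightarrow> \<pi> a = \<pi> b \<Longrightarrow> a = b" for a b
    using pi by (auto simp: bij_betw_def inj_on_def)
  have PB: "(P * B) $$ (a,l) = B $$ (\<pi> a, l)" if "a < m" "l < m" for a l
    unfolding mult_entry[OF P B that] using that pim by (simp add: P_def sum_one)
  have PTe: "P\<^sup>T $$ (l,b) = (if l = \<pi> b then 1 else 0)" if "l < m" "b < m" for l b
    using that by (simp add: P_def)
  have PBP: "P * B * P\<^sup>T = mat m m (\<lambda>(a,b). B $$ (\<pi> a, \<pi> b))"
  proof (rule eq_matI)
    fix a b assume ab: "a < dim_row (mat m m (\<lambda>(a,b). B $$ (\<pi> a, \<pi> b)))" "b < dim_col (mat m m (\<lambda>(a,b). B $$ (\<pi> a, \<pi> b)))"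
    hence a: "a < m" and b: "b < m" by auto
    have "(P * B * P\<^sup>T) $$ (a,b) = (\<Sum>l<m. (P * B) $$ (a,l) * P\<^sup>T $$ (l,b))"
      by (rule mult_entry[OF mult_carrier_mat[OF P B] PT a b])
    also have "\<dots> = (\<Sum>l<m. (if l = \<pi> b then 1 else 0) * B $$ (\<pi> a, l))"
      by (rule sum.cong) (use a b in \<open>auto simp: PB PTe\<close>)
    also have "\<dots> = B $$ (\<pi> a, \<pi> b)" using pim[OF b] by (rule sum_one)
    finally show "(P * B * P\<^sup>T) $$ (a,b) = mat m m (\<lambda>(a,b). B $$ (\<pi> a, \<pi> b)) $$ (a,b)" using a b by simp
  qed (use P B in auto)
  have PPT: "P * P\<^sup>T = 1\<^sub>m m"
  proof (rule eq_matI)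
    fix a b assume "a < dim_row (1\<^sub>m m :: real mat)" "b < dim_col (1\<^sub>m m :: real mat)"
    hence a: "a < m" and b: "b < m" by auto
    have "(P * P\<^sup>T) $$ (a,b) = (\<Sum>l<m. (if l = \<pi> a then 1 else 0) * (if l = \<pi> b then 1 else 0))"
      unfolding mult_entry[OF P PT a b] by (rule sum.cong) (use a b in \<open>auto simp: P_def\<close>)
    also have "\<dots> = (if \<pi> a = \<pi> b then 1 else 0)" using pim[OF a] by (rule sum_one[where f = "\<lambda>l. if l = \<pi> b then 1 else 0"])
    also have "\<dots> = 1\<^sub>m m $$ (a,b)" using a b pinj[OF a b] by auto
    finally show "(P * P\<^sup>T) $$ (a,b) = 1\<^sub>m m $$ (a,b)" .
  qed (use P in auto)
  have PTP: "P\<^sup>T * P = 1\<^sub>m m" by (rule mat_mult_left_right_inverse[OF P PT PPT])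
  have "similar_mat (mat m m (\<lambda>(a,b). B $$ (\<pi> a, \<pi> b))) B"
    unfolding similar_mat_def
    by (rule exI[of _ P], rule exI[of _ "P\<^sup>T"], rule similar_mat_witI[OF PPT PTP PBP[symmetric]])
       (use P PT B in auto)
  thus ?thesis by (rule char_poly_similar)
qed

definition Qrot :: "nat \<Rightarrow> nat \<Rightarrow> real \<Rightarrow> real \<Rightarrow> real mat" where
  "Qrot k v0 p q = mat (Suc k) (Suc k) (\<lambda>(i,l). if i = v0 then (if l = v0 then p else if l = k then -q else 0)
     else if i = k then (if l = v0 then q else if l = k then p else 0) else if l = i then 1 else 0)"

lemma Qrot_carrier[simp]: "Qrot k v0 p q \<in> carrier_mat (Suc k) (Suc k)" by (simp add: Qrot_def)

lemma Qrot_dim[simp]: "dim_row (Qrot k v0 p q) = Suc k" "dim_col (Qrot k v0 p q) = Suc k" by (simp_all add: Qrot_def)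

lemma Qrot_mult:
  assumes M: "M \<in> carrier_mat (Suc k) n'" and v: "v0 < k" and i: "i < Suc k" and j: "j < n'"
  shows "(Qrot k v0 p q * M) $$ (i,j) = (if i = v0 then p * M $$ (v0,j) - q * M $$ (k,j)
     else if i = k then q * M $$ (v0,j) + p * M $$ (k,j) else M $$ (i,j))"
proof -
  have e: "(Qrot k v0 p q * M) $$ (i,j) = (\<Sum>l<Suc k. Qrot k v0 p q $$ (i,l) * M $$ (l,j))"
    by (rule mult_entry[OF Qrot_carrier M i j])
  consider "i = v0" | "i = k" | "i \<noteq> v0" "i \<noteq> k" by blast
  thus ?thesis
  proof cases
    case 1
    have "(\<Sum>l<Suc k. Qrot k v0 p q $$ (i,l) * M $$ (l,j)) = (\<Sum>l<Suc k. (if l = v0 then p else if l = k then -q else 0) * M $$ (l,j))"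
      by (rule sum.cong) (use 1 v in \<open>auto simp: Qrot_def\<close>)
    also have "\<dots> = p * M $$ (v0,j) + (-q) * M $$ (k,j)" by (rule sum_two) (use v in auto)
    finally show ?thesis using e 1 by simp
  next
    case 2
    have "(\<Sum>l<Suc k. Qrot k v0 p q $$ (i,l) * M $$ (l,j)) = (\<Sum>l<Suc k. (if l = v0 then q else if l = k then p else 0) * M $$ (l,j))"
      by (rule sum.cong) (use 2 v in \<open>auto simp: Qrot_def\<close>)
    also have "\<dots> = q * M $$ (v0,j) + p * M $$ (k,j)" by (rule sum_two) (use v in auto)
    finally show ?thesis using e 2 v by simp
  next
    case 3
    have "(\<Sum>l<Suc k. Qrot k v0 p q $$ (i,l) * M $$ (l,j)) = (\<Sum>l<Suc k. (if l = i then 1 else 0) * M $$ (l,j))"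
      by (rule sum.cong) (use 3 i in \<open>auto simp: Qrot_def\<close>)
    also have "\<dots> = M $$ (i,j)" by (rule sum_one[OF i])
    finally show ?thesis using e 3 by simp
  qed
qed

lemma mult_QrotT:
  assumes M: "M \<in> carrier_mat n' (Suc k)" and v: "v0 < k" and i: "i < n'" and j: "j < Suc k"
  shows "(M * (Qrot k v0 p q)\<^sup>T) $$ (i,j) = (if j = v0 then p * M $$ (i,v0) - q * M $$ (i,k)
     else if j = k then q * M $$ (i,v0) + p * M $$ (i,k) else M $$ (i,j))"
proof -
  have "(M * (Qrot k v0 p q)\<^sup>T) $$ (i,j) = ((M * (Qrot k v0 p q)\<^sup>T)\<^sup>T) $$ (j,i)" using M i j by simp
  also have "(M * (Qrot k v0 p q)\<^sup>T)\<^sup>T = Qrot k v0 p q * M\<^sup>T"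
    by (subst transpose_mult[OF M]) (auto simp: transpose_carrier_mat)
  also have "(Qrot k v0 p q * M\<^sup>T) $$ (j,i) = (if j = v0 then p * M\<^sup>T $$ (v0,i) - q * M\<^sup>T $$ (k,i)
     else if j = k then q * M\<^sup>T $$ (v0,i) + p * M\<^sup>T $$ (k,i) else M\<^sup>T $$ (j,i))"
    by (rule Qrot_mult) (use M v i j in auto)
  finally show ?thesis using M v i j by auto
qed

lemma dup_matrix:
  fixes B' :: "real mat"
  assumes B': "B' \<in> carrier_mat k k" and sym: "B'\<^sup>T = B'" and v: "v0 < k"
    and F: "finite F" and cF: "c \<in> F" and diagF: "\<forall>i<k. B' $$ (i,i) \<notin> F"
  shows "\<exists>B. B \<in> carrier_mat (Suc k) (Suc k) \<and> B\<^sup>T = B \<and> char_poly B = char_poly B' * [:-c,1:] \<and>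
    (\<forall>i<Suc k. B $$ (i,i) \<notin> F) \<and>
    (\<forall>i<k. \<forall>j<k. i \<noteq> j \<longrightarrow> (B $$ (i,j) \<noteq> 0 \<longleftrightarrow> B' $$ (i,j) \<noteq> 0)) \<and>
    (\<forall>j<k. j \<noteq> v0 \<longrightarrow> (B $$ (k,j) \<noteq> 0 \<longleftrightarrow> B' $$ (v0,j) \<noteq> 0)) \<and> B $$ (k,v0) \<noteq> 0"
proof -
  define a where "a = B' $$ (v0,v0)"
  have aF: "a \<notin> F" using diagF v by (simp add: a_def)
  have ac: "a \<noteq> c" using aF cF by auto
  define Bad where "Bad = (\<lambda>f. (f - a) / (c - a)) ` F \<union> (\<lambda>f. (f - c) / (a - c)) ` F"
  have "finite Bad" using F by (simp add: Bad_def)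
  moreover have "infinite {0<..<(1::real)}" by simp
  ultimately have "infinite ({0<..<(1::real)} - Bad)" using Diff_infinite_finite by blast
  hence "{0<..<(1::real)} - Bad \<noteq> {}" by (metis finite.emptyI)
  then obtain \<tau> where tau: "\<tau> \<in> {0<..<1}" "\<tau> \<notin> Bad" by blast
  have t0: "0 < \<tau>" and t1: "\<tau> < 1" using tau by auto
  define d1 where "d1 = (1 - \<tau>) * a + \<tau> * c"
  define d2 where "d2 = \<tau> * a + (1 - \<tau>) * c"
  have d1F: "d1 \<notin> F"
  proof
    assume "d1 \<in> F"
    hence "(d1 - a) / (c - a) \<in> Bad" unfolding Bad_def by blast
    moreover have "(d1 - a) / (c - a) = \<tau>" using ac unfolding d1_def by (simp add: field_simps)
    ultimately show False using tau by simp
  qed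
  have d2F: "d2 \<notin> F"
  proof
    assume "d2 \<in> F"
    hence "(d2 - c) / (a - c) \<in> Bad" unfolding Bad_def by blast
    moreover have "(d2 - c) / (a - c) = \<tau>" using ac unfolding d2_def by (simp add: field_simps)
    ultimately show False using tau by simp
  qed
  define p where "p = sqrt (1 - \<tau>)"
  define q where "q = sqrt \<tau>"
  have p0: "0 < p" and q0: "0 < q" using t0 t1 by (auto simp: p_def q_def)
  have pp: "p * p = 1 - \<tau>" and qq: "q * q = \<tau>" using t0 t1 by (auto simp: p_def q_def)
  define D :: "real mat" where "D = mat (Suc k) (Suc k) (\<lambda>(i,j). if i < k \<and> j < k then B' $$ (i,j) else if i = k \<and> j = k then c else 0)"
  have D: "D \<in> carrier_mat (Suc k) (Suc k)" by (simp add: D_def)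
  define Q where "Q = Qrot k v0 p q"
  have Q: "Q \<in> carrier_mat (Suc k) (Suc k)" by (simp add: Q_def)
  define B where "B = Q * D * Q\<^sup>T"
  have B: "B \<in> carrier_mat (Suc k) (Suc k)" using Q D by (simp add: B_def)
  have QD: "(Q * D) $$ (i,j) = (if i = v0 then p * D $$ (v0,j) - q * D $$ (k,j)
     else if i = k then q * D $$ (v0,j) + p * D $$ (k,j) else D $$ (i,j))" if "i < Suc k" "j < Suc k" for i j
    unfolding Q_def by (rule Qrot_mult[OF D v that])
  have Bent: "B $$ (i,j) = (if j = v0 then p * (Q * D) $$ (i,v0) - q * (Q * D) $$ (i,k)
     else if j = k then q * (Q * D) $$ (i,v0) + p * (Q * D) $$ (i,k) else (Q * D) $$ (i,j))" if "i < Suc k" "j < Suc k" for i j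
    unfolding B_def Q_def by (rule mult_QrotT[OF mult_carrier_mat[OF Qrot_carrier D] v that])
  have Dent: "D $$ (i,j) = (if i < k \<and> j < k then B' $$ (i,j) else if i = k \<and> j = k then c else 0)" if "i < Suc k" "j < Suc k" for i j
    using that by (simp add: D_def)
  have vk: "v0 \<noteq> k" "v0 < Suc k" "k < Suc k" using v by auto
  have B1: "B $$ (i,j) = B' $$ (i,j)" if "i < k" "j < k" "i \<noteq> v0" "j \<noteq> v0" for i j
    using that vk by (simp add: Bent QD Dent)
  have B2: "B $$ (v0,j) = p * B' $$ (v0,j)" if "j < k" "j \<noteq> v0" for j
    using that vk v by (simp add: Bent QD Dent)
  have B3: "B $$ (i,v0) = p * B' $$ (i,v0)" if "i < k" "i \<noteq> v0" for i
    using that vk v by (simp add: Bent QD Dent)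
  have B4: "B $$ (k,j) = q * B' $$ (v0,j)" if "j < k" "j \<noteq> v0" for j
    using that vk v by (simp add: Bent QD Dent)
  have B5: "B $$ (k,v0) = p * q * (a - c)"
    using vk v by (simp add: Bent QD Dent a_def algebra_simps)
  have "B $$ (v0,v0) = (p * p) * a + (q * q) * c"
    using vk v by (simp add: Bent QD Dent a_def algebra_simps)
  hence B6: "B $$ (v0,v0) = d1" unfolding pp qq d1_def .
  have "B $$ (k,k) = (q * q) * a + (p * p) * c"
    using vk v by (simp add: Bent QD Dent a_def algebra_simps)
  hence B7: "B $$ (k,k) = d2" unfolding pp qq d2_def .
  have B8: "B $$ (i,k) = q * B' $$ (i,v0)" if "i < k" "i \<noteq> v0" for i
    using that vk v by (simp add: Bent QD Dent)
  have B9: "B $$ (v0,k) = p * q * (a - c)"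
    using vk v by (simp add: Bent QD Dent a_def algebra_simps)
  have B'sym: "B' $$ (i,j) = B' $$ (j,i)" if "i < k" "j < k" for i j
    using that sym by (metis B' carrier_matD index_transpose_mat(1))
  have Bsym: "B\<^sup>T = B"
  proof (rule eq_matI)
    fix i j assume "i < dim_row B" "j < dim_col B"
    hence i: "i < Suc k" and j: "j < Suc k" using B by auto
    have "B $$ (j,i) = B $$ (i,j)"
    proof -
      consider "i < k" "i \<noteq> v0" | "i = v0" | "i = k" using i by linarith
      note ci = this
      consider "j < k" "j \<noteq> v0" | "j = v0" | "j = k" using j by linarith
      note cj = this
      show ?thesis
        by (cases rule: ci; cases rule: cj) (simp_all add: B1 B2 B3 B4 B5 B6 B7 B8 B9 B'sym v)
    qed
    thus "B\<^sup>T $$ (i,j) = B $$ (i,j)" using i j B by simp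
  qed (use B in auto)
  have QQT: "Q * Q\<^sup>T = 1\<^sub>m (Suc k)"
  proof (rule eq_matI)
    fix i j assume "i < dim_row (1\<^sub>m (Suc k) :: real mat)" "j < dim_col (1\<^sub>m (Suc k) :: real mat)"
    hence i: "i < Suc k" and j: "j < Suc k" by auto
    have "(Q * Q\<^sup>T) $$ (i,j) = (if j = v0 then p * Q $$ (i,v0) - q * Q $$ (i,k)
     else if j = k then q * Q $$ (i,v0) + p * Q $$ (i,k) else Q $$ (i,j))"
      unfolding Q_def by (rule mult_QrotT[OF _ v i j]) simp
    also have "\<dots> = 1\<^sub>m (Suc k) $$ (i,j)"
      using i j vk pp qq by (auto simp: Q_def Qrot_def algebra_simps)
    finally show "(Q * Q\<^sup>T) $$ (i,j) = 1\<^sub>m (Suc k) $$ (i,j)" .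
  qed (use Q in auto)
  have QTQ: "Q\<^sup>T * Q = 1\<^sub>m (Suc k)"
    by (rule mat_mult_left_right_inverse[OF Q _ QQT]) (use Q in auto)
  have "similar_mat B D"
    unfolding similar_mat_def
    by (rule exI[of _ Q], rule exI[of _ "Q\<^sup>T"], rule similar_mat_witI[OF QQT QTQ B_def])
       (use Q D B in auto)
  hence cpB: "char_poly B = char_poly D" by (rule char_poly_similar)
  define C1 :: "real mat" where "C1 = mat 1 1 (\<lambda>_. c)"
  have cpD: "char_poly D = char_poly B' * [:-c,1:]"
  proof -
    have "char_poly_matrix D = four_block_mat (char_poly_matrix B') (0\<^sub>m k 1) (0\<^sub>m 1 k) (char_poly_matrix C1)"
      by (rule eq_matI) (use B' in \<open>auto simp: char_poly_matrix_def D_def C1_def\<close>)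
    hence "char_poly D = det (char_poly_matrix B') * det (char_poly_matrix C1)"
      unfolding char_poly_def
      by (simp add: det_four_block_mat_upper_right_zero[OF char_poly_matrix_closed[OF B'] refl] C1_def)
    also have "det (char_poly_matrix C1) = [:-c,1:]"
      by (subst det_single) (auto simp: char_poly_matrix_def C1_def)
    finally show ?thesis by (simp add: char_poly_def)
  qed
  have diagB: "\<forall>i<Suc k. B $$ (i,i) \<notin> F"
  proof (intro allI impI)
    fix i assume i: "i < Suc k"
    consider "i < k" "i \<noteq> v0" | "i = v0" | "i = k" using i by linarith
    thus "B $$ (i,i) \<notin> F"
      by cases (use diagF B1 B6 B7 d1F d2F in auto)
  qed
  have pat1: "\<forall>i<k. \<forall>j<k. i \<noteq> j \<longrightarrow> (B $$ (i,j) \<noteq> 0 \<longleftrightarrow> B' $$ (i,j) \<noteq> 0)"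
  proof (intro allI impI)
    fix i j assume i: "i < k" and j: "j < k" and ij: "i \<noteq> j"
    show "(B $$ (i,j) \<noteq> 0 \<longleftrightarrow> B' $$ (i,j) \<noteq> 0)"
    proof (cases "i = v0")
      case True thus ?thesis using B2[OF j] ij p0 by auto
    next
      case False
      show ?thesis
      proof (cases "j = v0")
        case True thus ?thesis using B3[OF i False] p0 by auto
      next
        case False' : False
        thus ?thesis using B1[OF i j False False'] by simp
      qed
    qed
  qed
  have pat2: "\<forall>j<k. j \<noteq> v0 \<longrightarrow> (B $$ (k,j) \<noteq> 0 \<longleftrightarrow> B' $$ (v0,j) \<noteq> 0)"
    using B4 q0 by auto
  have pat3: "B $$ (k,v0) \<noteq> 0" using B5 p0 q0 ac by simp
  show ?thesis
    by (rule exI[of _ B]) (intro conjI B Bsym diagB pat1 pat2 pat3, simp add: cpB cpD)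
qed

lemma relabel_S_graph:
  fixes B :: "real mat"
  assumes B: "B \<in> S_graph m H" and pi: "bij_betw \<pi> {..<m} {..<m}"
    and H': "\<And>u v. u < m \<Longrightarrow> v < m \<Longrightarrow> u \<noteq> v \<Longrightarrow> H' u v \<longleftrightarrow> H (\<pi> u) (\<pi> v)"
  shows "mat m m (\<lambda>(a,b). B $$ (\<pi> a, \<pi> b)) \<in> S_graph m H'"
proof -
  have pim: "a < m \<Longrightarrow> \<pi> a < m" for a using pi by (auto simp: bij_betw_def)
  have pinj: "a < m \<Longrightarrow> b < m \<Longrightarrow> \<pi> a = \<pi> b \<Longrightarrow> a = b" for a b
    using pi by (auto simp: bij_betw_def inj_on_def)
  have Bc: "B \<in> carrier_mat m m" and BT: "B\<^sup>T = B"
    and Bp: "\<And>i j. i < m \<Longrightarrow> j < m \<Longrightarrow> i \<noteq> j \<Longrightarrow> (B $$ (i,j) \<noteq> 0 \<longleftrightarrow> H i j)"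
    using B unfolding S_graph_def by auto
  have Bs: "B $$ (i,j) = B $$ (j,i)" if "i < m" "j < m" for i j
    using that BT Bc by (metis carrier_matD index_transpose_mat(1))
  show ?thesis unfolding S_graph_def
  proof (intro CollectI conjI allI impI)
    show "mat m m (\<lambda>(a,b). B $$ (\<pi> a, \<pi> b)) \<in> carrier_mat m m" by simp
    show "(mat m m (\<lambda>(a,b). B $$ (\<pi> a, \<pi> b)))\<^sup>T = mat m m (\<lambda>(a,b). B $$ (\<pi> a, \<pi> b))"
      by (rule eq_matI) (auto simp: Bs pim)
    fix i j assume i: "i < m" and j: "j < m" and ij: "i \<noteq> j"
    have "\<pi> i \<noteq> \<pi> j" using pinj[OF i j] ij by auto
    thus "(mat m m (\<lambda>(a,b). B $$ (\<pi> a, \<pi> b)) $$ (i, j) \<noteq> 0) = H' i j"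
      using i j ij Bp[OF pim[OF i] pim[OF j]] H'[OF i j] by simp
  qed
qed

lemma blow_ind:
  fixes A0 :: "real mat"
  assumes A0: "A0 \<in> S_graph n E" and A0d: "\<forall>i<n. A0 $$ (i,i) \<notin> F" and F: "finite F"
  shows "\<forall>m H f \<sigma>'. size \<sigma>' = k \<longrightarrow> m = n + k \<longrightarrow> f ` {0..<m} = {0..<n} \<longrightarrow>
     (\<forall>u v. H u v \<longleftrightarrow> u < m \<and> v < m \<and> u \<noteq> v \<and> (f u = f v \<or> E (f u) (f v))) \<longrightarrow>
     set_mset \<sigma>' \<subseteq> F \<longrightarrow>
     (\<exists>B \<in> S_graph m H. char_poly B = char_poly A0 * (\<Prod>a\<in>#\<sigma>'. [:- a, 1:]) \<and> (\<forall>i<m. B $$ (i,i) \<notin> F))"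
proof (induction k)
  case 0
  show ?case
  proof (intro allI impI)
    fix m H f and \<sigma>' :: "real multiset"
    assume s: "size \<sigma>' = 0" and m: "m = n + 0" and f: "f ` {0..<m} = {0..<n}"
      and H: "\<forall>u v. H u v \<longleftrightarrow> u < m \<and> v < m \<and> u \<noteq> v \<and> (f u = f v \<or> E (f u) (f v))"
      and sF: "set_mset \<sigma>' \<subseteq> F"
    have s0: "\<sigma>' = {#}" using s by simp
    have fin: "inj_on f {0..<n}" using f m by (intro eq_card_imp_inj_on) auto
    have bij: "bij_betw f {..<n} {..<n}" using fin f m by (simp add: bij_betw_def atLeast0LessThan)
    have A0c: "A0 \<in> carrier_mat n n" using A0 by (simp add: S_graph_def)
    have "mat n n (\<lambda>(a,b). A0 $$ (f a, f b)) \<in> S_graph n H"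
    proof (rule relabel_S_graph[OF A0 bij])
      fix u v assume u: "u < n" and v: "v < n" and uv: "u \<noteq> v"
      have "f u \<noteq> f v"
      proof
        assume "f u = f v"
        hence "u = v" by (rule inj_onD[OF fin]) (use u v in auto)
        with uv show False by simp
      qed
      thus "H u v \<longleftrightarrow> E (f u) (f v)" using H u v m uv by simp
    qed
    moreover have "char_poly (mat n n (\<lambda>(a,b). A0 $$ (f a, f b))) = char_poly A0"
      by (rule relabel_char_poly[OF A0c bij])
    moreover have "\<forall>i<n. mat n n (\<lambda>(a,b). A0 $$ (f a, f b)) $$ (i,i) \<notin> F"
    proof (intro allI impI)
      fix i assume i: "i < n"
      have "f i \<in> f ` {0..<m}" using i m by simp
      hence "f i < n" using f by simp
      thus "mat n n (\<lambda>(a,b). A0 $$ (f a, f b)) $$ (i,i) \<notin> F" using A0d i by simp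
    qed
    ultimately show "\<exists>B \<in> S_graph m H. char_poly B = char_poly A0 * (\<Prod>a\<in>#\<sigma>'. [:- a, 1:]) \<and> (\<forall>i<m. B $$ (i,i) \<notin> F)"
      using m s0 by auto
  qed
next
  case (Suc k)
  have A0c: "A0 \<in> carrier_mat n n" and A0T: "A0\<^sup>T = A0"
    and A0p: "\<And>i j. i < n \<Longrightarrow> j < n \<Longrightarrow> i \<noteq> j \<Longrightarrow> (A0 $$ (i,j) \<noteq> 0 \<longleftrightarrow> E i j)"
    using A0 unfolding S_graph_def by auto
  have Esym: "E a b \<longleftrightarrow> E b a" if "a < n" "b < n" "a \<noteq> b" for a b
  proof -
    have "A0 $$ (a,b) = A0 $$ (b,a)" using that A0T A0c by (metis carrier_matD index_transpose_mat(1))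
    thus ?thesis using A0p[OF that] A0p[of b a] that by auto
  qed
  show ?case
  proof (intro allI impI)
    fix m H f and \<sigma>' :: "real multiset"
    assume s: "size \<sigma>' = Suc k" and m: "m = n + Suc k" and f: "f ` {0..<m} = {0..<n}"
      and H: "\<forall>u v. H u v \<longleftrightarrow> u < m \<and> v < m \<and> u \<noteq> v \<and> (f u = f v \<or> E (f u) (f v))"
      and sF: "set_mset \<sigma>' \<subseteq> F"
    define m' where "m' = n + k"
    have mm: "m = Suc m'" using m by (simp add: m'_def)
    have fbnd: "x < m \<Longrightarrow> f x < n" for x
    proof -
      assume "x < m"
      hence "f x \<in> f ` {0..<m}" by simp
      thus "f x < n" using f by simp
    qed
    have "\<not> inj_on f {0..<m}"
    proof
      assume "inj_on f {0..<m}"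
      hence "card (f ` {0..<m}) = m" by (simp add: card_image)
      thus False using f m by simp
    qed
    then obtain w w' where w: "w < m" "w' < m" "w \<noteq> w'" "f w = f w'"
      unfolding inj_on_def by auto
    define \<pi> where "\<pi> x = (if x = w then m' else if x = m' then w else x)" for x
    have pipi: "\<pi> (\<pi> x) = x" for x by (simp add: \<pi>_def)
    have pim: "x < m \<Longrightarrow> \<pi> x < m" for x using w mm by (simp add: \<pi>_def)
    have bij: "bij_betw \<pi> {..<m} {..<m}"
    proof (rule bij_betwI[where g = \<pi>])
      show "\<pi> \<in> {..<m} \<rightarrow> {..<m}" using pim by auto
      show "\<pi> \<in> {..<m} \<rightarrow> {..<m}" using pim by auto
    qed (auto simp: pipi)
    have pinj: "\<pi> a = \<pi> b \<longleftrightarrow> a = b" for a b by (metis pipi)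
    define f2 where "f2 x = f (\<pi> x)" for x
    define v0 where "v0 = \<pi> w'"
    have v0m: "v0 < m'"
    proof -
      have "v0 < m" using pim w by (simp add: v0_def)
      moreover have "v0 \<noteq> m'" using w by (auto simp: v0_def \<pi>_def split: if_splits)
      ultimately show ?thesis using mm by simp
    qed
    have f2v0: "f2 m' = f2 v0" using w by (simp add: f2_def v0_def pipi) (simp add: \<pi>_def)
    have f2bnd: "x < m \<Longrightarrow> f2 x < n" for x by (simp add: f2_def fbnd pim)
    define H' where "H' u v \<longleftrightarrow> u < m' \<and> v < m' \<and> u \<noteq> v \<and> (f2 u = f2 v \<or> E (f2 u) (f2 v))" for u v
    have f2im: "f2 ` {0..<m'} = {0..<n}"
    proof
      show "f2 ` {0..<m'} \<subseteq> {0..<n}" using f2bnd mm by auto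
      show "{0..<n} \<subseteq> f2 ` {0..<m'}"
      proof
        fix y assume "y \<in> {0..<n}"
        then obtain x where x: "x < m" "y = f x" using f by (metis atLeastLessThan_iff imageE zero_le)
        have y: "y = f2 (\<pi> x)" using x by (simp add: f2_def pipi)
        show "y \<in> f2 ` {0..<m'}"
        proof (cases "\<pi> x = m'")
          case True
          thus ?thesis using y f2v0 v0m by auto
        next
          case False
          hence "\<pi> x < m'" using pim[OF x(1)] mm by simp
          thus ?thesis using y by auto
        qed
      qed
    qed
    obtain c where c: "c \<in># \<sigma>'" using s by (metis size_empty nat.distinct(1) multiset_nonemptyE)
    define \<sigma>'' where "\<sigma>'' = \<sigma>' - {#c#}"
    have s2: "\<sigma>' = add_mset c \<sigma>''" using c by (simp add: \<sigma>''_def)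
    have s2size: "size \<sigma>'' = k" using s s2 by simp
    have s2F: "set_mset \<sigma>'' \<subseteq> F" using sF s2 by auto
    have cF: "c \<in> F" using sF c by auto
    obtain B' where B'S: "B' \<in> S_graph m' H'" and B'cp: "char_poly B' = char_poly A0 * (\<Prod>a\<in>#\<sigma>''. [:- a, 1:])"
      and B'd: "\<forall>i<m'. B' $$ (i,i) \<notin> F"
      using Suc.IH[rule_format, OF s2size m'_def f2im _ s2F] H'_def by blast
    have B'c: "B' \<in> carrier_mat m' m'" and B'T: "B'\<^sup>T = B'"
      and B'p: "\<And>i j. i < m' \<Longrightarrow> j < m' \<Longrightarrow> i \<noteq> j \<Longrightarrow> (B' $$ (i,j) \<noteq> 0 \<longleftrightarrow> H' i j)"
      using B'S unfolding S_graph_def by auto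
    obtain B2 where B2c: "B2 \<in> carrier_mat (Suc m') (Suc m')" and B2T: "B2\<^sup>T = B2"
      and B2cp: "char_poly B2 = char_poly B' * [:-c,1:]"
      and B2d: "\<forall>i<Suc m'. B2 $$ (i,i) \<notin> F"
      and P1: "\<forall>i<m'. \<forall>j<m'. i \<noteq> j \<longrightarrow> (B2 $$ (i,j) \<noteq> 0 \<longleftrightarrow> B' $$ (i,j) \<noteq> 0)"
      and P2: "\<forall>j<m'. j \<noteq> v0 \<longrightarrow> (B2 $$ (m',j) \<noteq> 0 \<longleftrightarrow> B' $$ (v0,j) \<noteq> 0)"
      and P3: "B2 $$ (m',v0) \<noteq> 0"
      using dup_matrix[OF B'c B'T v0m F cF B'd] by blast
    have B2s: "B2 $$ (i,j) = B2 $$ (j,i)" if "i < Suc m'" "j < Suc m'" for i j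
      using that B2T B2c by (metis carrier_matD index_transpose_mat(1))
    define R where "R i j \<longleftrightarrow> f2 i = f2 j \<or> E (f2 i) (f2 j)" for i j
    have Rsym: "R i j \<longleftrightarrow> R j i" if "i < m" "j < m" for i j
      using Esym[OF f2bnd[OF that(1)] f2bnd[OF that(2)]] unfolding R_def by (cases "f2 i = f2 j") auto
    have Rm: "R m' j \<longleftrightarrow> R v0 j" for j unfolding R_def f2v0 ..
    have main: "B2 $$ (i,j) \<noteq> 0 \<longleftrightarrow> R i j" if i: "i < m" and j: "j < m" and ij: "i \<noteq> j" for i j
    proof -
      have case_last: "B2 $$ (m',j) \<noteq> 0 \<longleftrightarrow> R m' j" if j: "j < m'" for j
      proof (cases "j = v0")
        case True thus ?thesis using P3 f2v0 by (simp add: R_def)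
      next
        case False
        have "B2 $$ (m',j) \<noteq> 0 \<longleftrightarrow> B' $$ (v0,j) \<noteq> 0" using P2 j False by blast
        also have "\<dots> \<longleftrightarrow> H' v0 j" using B'p[OF v0m j] False by auto
        also have "\<dots> \<longleftrightarrow> R v0 j" using v0m j False by (simp add: H'_def R_def)
        finally show ?thesis using Rm by simp
      qed
      consider "i < m'" "j < m'" | "i = m'" "j < m'" | "i < m'" "j = m'" using i j ij mm by linarith
      thus ?thesis
      proof cases
        case 1
        thus ?thesis using P1 B'p[OF 1 ij] ij by (simp add: H'_def R_def)
      next
        case 2 thus ?thesis using case_last by simp
      next
        case 3
        have "B2 $$ (i,j) = B2 $$ (m',i)" using 3 B2s[of i m'] by simp
        thus ?thesis using case_last[OF 3(1)] Rsym[OF i j] 3 by simp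
      qed
    qed
    define H2 where "H2 a b \<longleftrightarrow> H (\<pi> a) (\<pi> b)" for a b
    have B2S: "B2 \<in> S_graph m H2"
      unfolding S_graph_def
    proof (intro CollectI conjI allI impI)
      show "B2 \<in> carrier_mat m m" using B2c mm by simp
      show "B2\<^sup>T = B2" by (rule B2T)
      fix i j assume i: "i < m" and j: "j < m" and ij: "i \<noteq> j"
      have "H2 i j \<longleftrightarrow> R i j" using i j ij pim[OF i] pim[OF j] H
        by (simp add: H2_def R_def f2_def pinj)
      thus "(B2 $$ (i,j) \<noteq> 0) = H2 i j" using main[OF i j ij] by simp
    qed
    define B where "B = mat m m (\<lambda>(a,b). B2 $$ (\<pi> a, \<pi> b))"
    have "B \<in> S_graph m H" unfolding B_def
      by (rule relabel_S_graph[OF B2S bij]) (simp add: H2_def pipi)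
    moreover have "char_poly B = char_poly A0 * (\<Prod>a\<in>#\<sigma>'. [:- a, 1:])"
    proof -
      have "char_poly B = char_poly B2" unfolding B_def
        by (rule relabel_char_poly[OF _ bij]) (use B2c mm in simp)
      thus ?thesis using B2cp B'cp s2 by (simp add: algebra_simps)
    qed
    moreover have "\<forall>i<m. B $$ (i,i) \<notin> F"
      using B2d pim mm by (simp add: B_def)
    ultimately show "\<exists>B \<in> S_graph m H. char_poly B = char_poly A0 * (\<Prod>a\<in>#\<sigma>'. [:- a, 1:]) \<and> (\<forall>i<m. B $$ (i,i) \<notin> F)"
      by blast
  qed
qed

theorem theorem2p5:
  fixes n m :: nat and E H :: "nat \<Rightarrow> nat \<Rightarrow> bool"
    and \<sigma> \<sigma>' :: "real multiset"
  assumes "n \<ge> 2"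
    and "simple_graph n E"
    and "connected_graph n E"
    and "is_blowup n E m H"
    and "size \<sigma> = n"
    and "\<forall>x. count \<sigma> x \<le> 1"
    and "size \<sigma>' = m - n"
  shows "\<exists>A \<in> S_graph m H. is_spectrum A (\<sigma> + \<sigma>')"
proof -
  note n2 = assms(1) and sg = assms(2) and con = assms(3) and bl = assms(4)
    and sz = assms(5) and cnt = assms(6) and sz' = assms(7)
  obtain f where f: "f ` {0..<m} = {0..<n}"
    and H: "\<forall>u v. H u v \<longleftrightarrow> u < m \<and> v < m \<and> u \<noteq> v \<and> (f u = f v \<or> E (f u) (f v))"
    using bl unfolding is_blowup_def by (elim exE conjE) assumption
  have nm: "n \<le> m"
  proof -
    have "card (f ` {0..<m}) \<le> card {0..<m}" by (rule card_image_le) simp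
    thus ?thesis using f by simp
  qed
  obtain xs where xs: "mset xs = \<sigma>" using ex_mset by blast
  have len: "length xs = n" using xs sz by (metis size_mset)
  have dxs: "distinct xs"
    unfolding distinct_count_atmost_1
  proof
    fix a
    have c1: "count (mset xs) a \<le> 1" using cnt xs by simp
    have c2: "count (mset xs) a > 0 \<longleftrightarrow> a \<in> set xs" by (metis count_greater_zero_iff set_mset_mset)
    show "count (mset xs) a = (if a \<in> set xs then 1 else 0)"
    proof (cases "a \<in> set xs")
      case True
      hence "count (mset xs) a > 0" using c2 by blast
      hence "count (mset xs) a = 1" using c1 by linarith
      thus ?thesis using True by simp
    next
      case False thus ?thesis using c2 by simp
    qed
  qed
  define lam where "lam i = xs ! i" for i
  have dist: "lam i \<noteq> lam j" if "i < n" "j < n" "i \<noteq> j" for i j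
    using that dxs len by (simp add: lam_def nth_eq_iff_index_eq)
  have nb: "\<exists>j<n. E i j" if i: "i < n" for i
  proof -
    define j where "j = (if i = 0 then 1 else 0::nat)"
    have j: "j < n" "j \<noteq> i" using n2 i by (auto simp: j_def)
    have "E\<^sup>*\<^sup>* i j" using con i j unfolding connected_graph_def by blast
    then obtain y where "E i y"
      by (rule converse_rtranclpE) (use j in auto)
    moreover have "y < n" using sg \<open>E i y\<close> unfolding simple_graph_def by blast
    ultimately show ?thesis by blast
  qed
  define F where "F = set_mset \<sigma>'"
  have finF: "finite F" by (simp add: F_def)
  obtain A0 where A0: "A0 \<in> S_graph n E" and A0cp: "char_poly A0 = (\<Prod>i=0..<n. [:- lam i, 1:])"
    and A0d: "\<forall>i<n. A0 $$ (i,i) \<notin> F"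
    using base_matrix[where lam=lam and F=F, OF sg nb dist _ finF] n2 by auto
  obtain B where B: "B \<in> S_graph m H" and Bcp: "char_poly B = char_poly A0 * (\<Prod>a\<in>#\<sigma>'. [:- a, 1:])"
    using blow_ind[where k = "m - n", OF A0 A0d finF, rule_format, of \<sigma>' m f H] sz' nm f H by (auto simp: F_def)
  have "(\<Prod>i=0..<n. [:- lam i, 1:]) = (\<Prod>a\<in>#\<sigma>. [:- a, 1:])"
  proof -
    have "(\<Prod>i=0..<n. [:- lam i, 1:]) = prod_list (map (\<lambda>i. [:- lam i, 1:]) [0..<n])"
      by (simp add: prod.distinct_set_conv_list[symmetric] atLeast_upt)
    also have "map (\<lambda>i. [:- lam i, 1:]) [0..<n] = map (\<lambda>a. [:- a, 1:]) (map ((!) xs) [0..<length xs])"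
      by (simp add: lam_def len)
    also have "map ((!) xs) [0..<length xs] = xs" by (rule map_nth)
    also have "prod_list (map (\<lambda>a. [:- a, 1:]) xs) = (\<Prod>a\<in>#\<sigma>. [:- a, 1:])"
      unfolding xs[symmetric] by (metis mset_map prod_mset_prod_list)
    finally show ?thesis .
  qed
  hence "char_poly B = (\<Prod>a\<in>#\<sigma> + \<sigma>'. [:- a, 1:])" using Bcp A0cp by simp
  thus ?thesis using B unfolding is_spectrum_def by blast
qed

end
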